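(* Let $n\ge 2$ and let $\rho$ be an $n$-qubit entangled symmetric state. Define $M(\rho)=\min\{|\mathcal S|:\mathcal S\subseteq\mathcal S_{L(\rho)},\ \mathcal S\text{ determines }\rho\}$ and $m(\rho)=\min\{|\mathcal S|:\mathcal S\subseteq\mathcal S_{l(\rho)},\ \mathcal S\text{ detects }\rho\text{'s GME}\}$. Then $L(\rho)\ge 2$, $l(\rho)\ge2$, and $$M(\rho)=\left\lceil\frac{n-1}{L(\rho)-1}\right\rceil,\qquad m(\rho)=\left\lceil\frac{n-1}{l(\rho)-1}\right\rceil.$$
   Context: Let $[n]=\{1,\dots,n\}$, $\mathcal H_{[n]}=(\mathbb C^2)^{\otimes n}$; for $S\subseteq[n]$, $\rho_S$ is the partial trace over the qubits outside $S$. $\mathcal S_k$ denotes the collection of all $k$-element subsets of $[n]$. A pure state is biseparable if it is a product $|\alpha\rangle_S\otimes|\beta\rangle_{\bar S}$ for some $\emptyset\ne S\subsetneq[n]$, and fully separable if separable with respect to every bipartition; mixed states are biseparable (fully separable) if convex combinations of such pure states; entangled = not fully separable; genuinely entangled = not biseparable. $\mathcal C(\rho,\mathcal S)=\{\sigma\text{ density matrix}:\sigma_S=\rho_S\ \forall S\in\mathcal S\}$; $\mathcal S$ determines $\rho$ if $\mathcal C(\rho,\mathcal S)=\{\rho\}$, and detects $\rho$'s GME if all elements of $\mathcal C(\rho,\mathcal S)$ are genuinely entangled. $L(\rho)=\min_{\mathcal S\text{ determines }\rho}\max_{S\in\mathcal S}|S|$, $l(\rho)=\min_{\mathcal S\text{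 detects }\rho\text{'s GME}}\max_{S\in\mathcal S}|S|$. A state is symmetric if its range lies in the subspace of vectors invariant under swapping any two qubits. *)

theory Defs
  imports Complex_Main
begin

text \<open>A computational basis vector of
(C^2)^{\<otimes>n} is labelled by the subset x of {1..n} of qubits in state |1>.
Vectors are functions nat set => complex, operators are functions
nat set => nat set => complex (matrix entries), both vanishing outside Pow {1..n}.\<close>

definition qubits :: "nat \<Rightarrow> nat set" where
  "qubits n = {1..n}"

definition is_vec :: "nat set \<Rightarrow> (nat set \<Rightarrow> complex) \<Rightarrow> bool" where
  "is_vec A v \<longleftrightarrow> (\<forall>x. \<not> x \<subseteq> A \<longrightarrow> v x = 0)"

definition is_op :: "nat set \<Rightarrow> (nat set \<Rightarrow> nat set \<Rightarrow> complex) \<Rightarrow> bool" where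
  "is_op A r \<longleftrightarrow> (\<forall>x y. \<not> (x \<subseteq> A \<and> y \<subseteq> A) \<longrightarrow> r x y = 0)"

definition density :: "nat \<Rightarrow> (nat set \<Rightarrow> nat set \<Rightarrow> complex) \<Rightarrow> bool" where
  "density n r \<longleftrightarrow> is_op (qubits n) r
     \<and> (\<forall>x y. r y x = cnj (r x y))
     \<and> (\<forall>v. let q = (\<Sum>x\<in>Pow (qubits n). \<Sum>y\<in>Pow (qubits n). cnj (v x) * r x y * v y)
            in Im q = 0 \<and> Re q \<ge> 0)
     \<and> (\<Sum>x\<in>Pow (qubits n). r x x) = 1"

definition ptrace :: "nat \<Rightarrow> (nat set \<Rightarrow> nat set \<Rightarrow> complex) \<Rightarrow> nat set \<Rightarrow> nat set \<Rightarrow> nat set \<Rightarrow> complex" where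
  "ptrace n r S x y = (if x \<subseteq> S \<and> y \<subseteq> S
       then (\<Sum>z\<in>Pow (qubits n - S). r (x \<union> z) (y \<union> z)) else 0)"

definition unit_vec :: "nat set \<Rightarrow> (nat set \<Rightarrow> complex) \<Rightarrow> bool" where
  "unit_vec A v \<longleftrightarrow> is_vec A v \<and> (\<Sum>x\<in>Pow A. (cmod (v x))\<^sup>2) = 1"

definition proj :: "(nat set \<Rightarrow> complex) \<Rightarrow> nat set \<Rightarrow> nat set \<Rightarrow> complex" where
  "proj v x y = v x * cnj (v y)"

definition product_wrt :: "nat \<Rightarrow> nat set \<Rightarrow> (nat set \<Rightarrow> complex) \<Rightarrow> bool" where
  "product_wrt n S psi \<longleftrightarrow> (\<exists>\<alpha> \<beta>. unit_vec S \<alpha> \<and> unit_vec (qubits n - S) \<beta> \<and>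
       (\<forall>x\<subseteq>qubits n. psi x = \<alpha> (x \<inter> S) * \<beta> (x - S)))"

definition proper_bipart :: "nat \<Rightarrow> nat set \<Rightarrow> bool" where
  "proper_bipart n S \<longleftrightarrow> S \<noteq> {} \<and> S \<subset> qubits n"

definition pure_bisep :: "nat \<Rightarrow> (nat set \<Rightarrow> complex) \<Rightarrow> bool" where
  "pure_bisep n psi \<longleftrightarrow> unit_vec (qubits n) psi \<and> (\<exists>S. proper_bipart n S \<and> product_wrt n S psi)"

definition pure_fullsep :: "nat \<Rightarrow> (nat set \<Rightarrow> complex) \<Rightarrow> bool" where
  "pure_fullsep n psi \<longleftrightarrow> unit_vec (qubits n) psi \<and> (\<forall>S. proper_bipart n S \<longrightarrow> product_wrt n S psi)"

definition convex_pure :: "((nat set \<Rightarrow> complex) \<Rightarrow> bool) \<Rightarrow> (nat set \<Rightarrow> nat set \<Rightarrow> complex) \<Rightarrow> bool" where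
  "convex_pure P r \<longleftrightarrow> (\<exists>k (p :: nat \<Rightarrow> real) psi.
      (\<forall>i<k. p i \<ge> 0 \<and> P (psi i)) \<and> (\<Sum>i<k. p i) = 1 \<and>
      r = (\<lambda>x y. \<Sum>i<k. complex_of_real (p i) * proj (psi i) x y))"

definition biseparable :: "nat \<Rightarrow> (nat set \<Rightarrow> nat set \<Rightarrow> complex) \<Rightarrow> bool" where
  "biseparable n r \<longleftrightarrow> convex_pure (pure_bisep n) r"

definition fully_separable :: "nat \<Rightarrow> (nat set \<Rightarrow> nat set \<Rightarrow> complex) \<Rightarrow> bool" where
  "fully_separable n r \<longleftrightarrow> convex_pure (pure_fullsep n) r"

definition entangled :: "nat \<Rightarrow> (nat set \<Rightarrow> nat set \<Rightarrow> complex) \<Rightarrow> bool" where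
  "entangled n r \<longleftrightarrow> \<not> fully_separable n r"

definition genuinely_entangled :: "nat \<Rightarrow> (nat set \<Rightarrow> nat set \<Rightarrow> complex) \<Rightarrow> bool" where
  "genuinely_entangled n r \<longleftrightarrow> \<not> biseparable n r"

definition swap_lbl :: "nat \<Rightarrow> nat \<Rightarrow> nat set \<Rightarrow> nat set" where
  "swap_lbl i j x = (\<lambda>k. if k = i then j else if k = j then i else k) ` x"

definition sym_vec :: "nat \<Rightarrow> (nat set \<Rightarrow> complex) \<Rightarrow> bool" where
  "sym_vec n v \<longleftrightarrow> (\<forall>i\<in>qubits n. \<forall>j\<in>qubits n. \<forall>x. v (swap_lbl i j x) = v x)"

definition apply_op :: "nat \<Rightarrow> (nat set \<Rightarrow> nat set \<Rightarrow> complex) \<Rightarrow> (nat set \<Rightarrow> complex) \<Rightarrow> nat set \<Rightarrow> complex" where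
  "apply_op n r v x = (\<Sum>y\<in>Pow (qubits n). r x y * v y)"

definition symmetric_state :: "nat \<Rightarrow> (nat set \<Rightarrow> nat set \<Rightarrow> complex) \<Rightarrow> bool" where
  "symmetric_state n r \<longleftrightarrow> (\<forall>v. is_vec (qubits n) v \<longrightarrow> sym_vec n (apply_op n r v))"

definition compat :: "nat \<Rightarrow> (nat set \<Rightarrow> nat set \<Rightarrow> complex) \<Rightarrow> nat set set \<Rightarrow> (nat set \<Rightarrow> nat set \<Rightarrow> complex) set" where
  "compat n r SS = {s. density n s \<and> (\<forall>S\<in>SS. ptrace n s S = ptrace n r S)}"

definition determines :: "nat \<Rightarrow> nat set set \<Rightarrow> (nat set \<Rightarrow> nat set \<Rightarrow> complex) \<Rightarrow> bool" where
  "determines n SS r \<longleftrightarrow> SS \<subseteq> Pow (qubits n) \<and> compat n r SS = {r}"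

definition detects_GME :: "nat \<Rightarrow> nat set set \<Rightarrow> (nat set \<Rightarrow> nat set \<Rightarrow> complex) \<Rightarrow> bool" where
  "detects_GME n SS r \<longleftrightarrow> SS \<subseteq> Pow (qubits n) \<and> (\<forall>s\<in>compat n r SS. genuinely_entangled n s)"

definition subsets_k :: "nat \<Rightarrow> nat \<Rightarrow> nat set set" where
  "subsets_k n k = {S. S \<subseteq> qubits n \<and> card S = k}"

text \<open>min over SS of max_{S in SS} |S| equals the least k admitting an SS with all |S| <= k.\<close>
definition L_num :: "nat \<Rightarrow> (nat set \<Rightarrow> nat set \<Rightarrow> complex) \<Rightarrow> nat" where
  "L_num n r = (LEAST k. \<exists>SS. determines n SS r \<and> (\<forall>S\<in>SS. card S \<le> k))"

definition l_num :: "nat \<Rightarrow> (nat set \<Rightarrow> nat set \<Rightarrow> complex) \<Rightarrow> nat" where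
  "l_num n r = (LEAST k. \<exists>SS. detects_GME n SS r \<and> (\<forall>S\<in>SS. card S \<le> k))"

definition M_num :: "nat \<Rightarrow> (nat set \<Rightarrow> nat set \<Rightarrow> complex) \<Rightarrow> nat" where
  "M_num n r = (LEAST c. \<exists>SS. SS \<subseteq> subsets_k n (L_num n r) \<and> determines n SS r \<and> card SS = c)"

definition m_num :: "nat \<Rightarrow> (nat set \<Rightarrow> nat set \<Rightarrow> complex) \<Rightarrow> nat" where
  "m_num n r = (LEAST c. \<exists>SS. SS \<subseteq> subsets_k n (l_num n r) \<and> detects_GME n SS r \<and> card SS = c)"

end

theory Submission
  imports Defs
begin

definition qf :: "nat set \<Rightarrow> (nat set \<Rightarrow> nat set \<Rightarrow> complex) \<Rightarrow> (nat set \<Rightarrow> complex) \<Rightarrow> complex" where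
  "qf V r v = (\<Sum>x\<in>Pow V. \<Sum>y\<in>Pow V. cnj (v x) * r x y * v y)"

definition bil :: "nat set \<Rightarrow> (nat set \<Rightarrow> nat set \<Rightarrow> complex) \<Rightarrow> (nat set \<Rightarrow> complex) \<Rightarrow> (nat set \<Rightarrow> complex) \<Rightarrow> complex" where
  "bil V r u w = (\<Sum>x\<in>Pow V. \<Sum>y\<in>Pow V. cnj (u x) * r x y * w y)"

definition psd :: "nat set \<Rightarrow> (nat set \<Rightarrow> nat set \<Rightarrow> complex) \<Rightarrow> bool" where
  "psd V r \<longleftrightarrow> (\<forall>v. Im (qf V r v) = 0 \<and> Re (qf V r v) \<ge> 0)"

definition herm :: "(nat set \<Rightarrow> nat set \<Rightarrow> complex) \<Rightarrow> bool" where
  "herm r \<longleftrightarrow> (\<forall>x y. r y x = cnj (r x y))"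

definition ptr :: "nat set \<Rightarrow> (nat set \<Rightarrow> nat set \<Rightarrow> complex) \<Rightarrow> nat set \<Rightarrow> nat set \<Rightarrow> nat set \<Rightarrow> complex" where
  "ptr V r S x y = (if x \<subseteq> S \<and> y \<subseteq> S then (\<Sum>z\<in>Pow (V - S). r (x \<union> z) (y \<union> z)) else 0)"

lemma ptrace_ptr: "ptrace n = ptr (qubits n)"
  by (intro ext) (simp add: ptrace_def ptr_def)

lemma density_iff: "density n r \<longleftrightarrow> is_op (qubits n) r \<and> herm r \<and> psd (qubits n) r
   \<and> (\<Sum>x\<in>Pow (qubits n). r x x) = 1"
  unfolding density_def herm_def psd_def qf_def Let_def by blast

lemma finite_qubits[simp]: "finite (qubits n)" by (simp add: qubits_def)

lemma ptr_out: "\<not> (x \<subseteq> S \<and> y \<subseteq> S) \<Longrightarrow> ptr V r S x y = 0"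
  unfolding ptr_def by auto

lemma sum_Pow_split:
  assumes "finite A" "finite B" "A \<inter> B = {}"
  shows "(\<Sum>z\<in>Pow (A \<union> B). f z) = (\<Sum>a\<in>Pow A. \<Sum>b\<in>Pow B. f (a \<union> b))"
proof -
  have "(\<Sum>a\<in>Pow A. \<Sum>b\<in>Pow B. f (a \<union> b)) = (\<Sum>p\<in>Pow A \<times> Pow B. f (fst p \<union> snd p))"
    by (simp add: sum.cartesian_product split_def)
  also have "\<dots> = (\<Sum>z\<in>Pow (A \<union> B). f z)"
    by (rule sum.reindex_bij_witness[where i = "\<lambda>z. (z \<inter> A, z \<inter> B)" and j = "\<lambda>p. fst p \<union> snd p"])
       (use assms in auto)
  finally show ?thesis by simp
qed

lemma ptr_ptr:
  assumes "finite V" "T \<subseteq> S" "S \<subseteq> V"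
  shows "ptr V r T x y = ptr S (ptr V r S) T x y"
proof (cases "x \<subseteq> T \<and> y \<subseteq> T")
  case True
  have fin: "finite S" using assms finite_subset by blast
  have VT: "V - T = (S - T) \<union> (V - S)" using assms by auto
  have "ptr V r T x y = (\<Sum>z\<in>Pow ((S - T) \<union> (V - S)). r (x \<union> z) (y \<union> z))"
    using True by (simp add: ptr_def VT)
  also have "\<dots> = (\<Sum>a\<in>Pow (S - T). \<Sum>b\<in>Pow (V - S). r (x \<union> (a \<union> b)) (y \<union> (a \<union> b)))"
    by (rule sum_Pow_split) (use assms fin in auto)
  also have "\<dots> = (\<Sum>a\<in>Pow (S - T). ptr V r S (x \<union> a) (y \<union> a))"
  proof (rule sum.cong[OF refl])
    fix a assume "a \<in> Pow (S - T)"
    then have "x \<union> a \<subseteq> S" "y \<union> a \<subseteq> S" using True assms by auto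
    then show "(\<Sum>b\<in>Pow (V - S). r (x \<union> (a \<union> b)) (y \<union> (a \<union> b))) = ptr V r S (x \<union> a) (y \<union> a)"
      by (simp add: ptr_def Un_assoc)
  qed
  also have "\<dots> = ptr S (ptr V r S) T x y"
    using True by (simp add: ptr_def)
  finally show ?thesis .
next
  case False then show ?thesis by (simp add: ptr_out)
qed

lemma ptr_eq_sub:
  assumes "finite V" "T \<subseteq> S" "S \<subseteq> V" "ptr V s S = ptr V r S"
  shows "ptr V s T = ptr V r T"
  using ptr_ptr[OF assms(1-3)] assms(4) by (intro ext) metis

lemma qf_add:
  "qf V r (\<lambda>x. u x + c * w x) = qf V r u + c * bil V r u w + cnj c * bil V r w u + (c * cnj c) * qf V r w"
  unfolding qf_def bil_def
  by (simp add: algebra_simps sum.distrib sum_distrib_left)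

lemma real_quad_aux:
  fixes a d :: real
  assumes "\<And>t. 0 \<le> t * a + t\<^sup>2 * d"
  shows "a = 0"
proof (rule ccontr)
  assume a: "a \<noteq> 0"
  define t where "t = - a / (\<bar>d\<bar> + 1)"
  have pos: "\<bar>d\<bar> + 1 > 0" by simp
  have "t * a + t\<^sup>2 * d \<le> t * a + t\<^sup>2 * \<bar>d\<bar>"
    by (simp add: mult_left_mono)
  also have "\<dots> = - a\<^sup>2 / (\<bar>d\<bar> + 1)\<^sup>2"
  proof -
    define e where "e = \<bar>d\<bar> + 1"
    have e: "e > 0" "\<bar>d\<bar> = e - 1" using pos unfolding e_def by auto
    show ?thesis unfolding t_def e_def[symmetric] e(2) using e(1)
      by (simp add: field_simps power2_eq_square)
  qed
  also have "\<dots> < 0"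
  proof -
    have "a\<^sup>2 > 0" "(\<bar>d\<bar> + 1)\<^sup>2 > 0" using a pos by auto
    then show ?thesis by (simp add: divide_pos_pos)
  qed
  finally show False using assms[of t] by simp
qed

lemma psd_kernel:
  assumes "psd V r" "qf V r u = 0"
  shows "bil V r w u = 0"
proof -
  define b1 where "b1 = bil V r u w"
  define b2 where "b2 = bil V r w u"
  define d where "d = qf V r w"
  have dr: "Im d = 0" using assms(1) unfolding psd_def d_def by blast
  have q: "\<And>c. qf V r (\<lambda>x. u x + c * w x) = c * b1 + cnj c * b2 + (c * cnj c) * d"
    using qf_add assms(2) unfolding b1_def b2_def d_def by simp
  have P: "\<And>c. Im (c * b1 + cnj c * b2 + (c * cnj c) * d) = 0 \<and> Re (c * b1 + cnj c * b2 + (c * cnj c) * d) \<ge> 0"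
    using assms(1) q unfolding psd_def by metis
  have 1: "Re (b1 + b2) = 0"
  proof (rule real_quad_aux[where d = "Re d"])
    fix t :: real
    show "0 \<le> t * Re (b1 + b2) + t\<^sup>2 * Re d"
      using P[of "complex_of_real t"] dr by (simp add: power2_eq_square algebra_simps)
  qed
  have 2: "Im (b1 + b2) = 0"
    using P[of 1] dr by simp
  have 3: "Im (b1 - b2) = 0"
  proof -
    have "- Im (b1 - b2) = 0"
    proof (rule real_quad_aux[where d = "Re d"])
      fix t :: real
      show "0 \<le> t * (- Im (b1 - b2)) + t\<^sup>2 * Re d"
        using P[of "\<i> * complex_of_real t"] dr by (simp add: power2_eq_square algebra_simps)
    qed
    then show ?thesis by simp
  qed
  have 4: "Re (b1 - b2) = 0"
    using P[of "\<i>"] dr by (simp add: algebra_simps)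
  show ?thesis using 1 2 3 4 unfolding b2_def[symmetric] by (simp add: complex_eq_iff)
qed

definition tau :: "nat \<Rightarrow> nat \<Rightarrow> nat \<Rightarrow> nat" where
  "tau i j k = (if k = i then j else if k = j then i else k)"

lemma swap_lbl_tau: "swap_lbl i j x = tau i j ` x"
  by (simp add: swap_lbl_def tau_def)

lemma tau_tau[simp]: "tau i j (tau i j k) = k" by (simp add: tau_def)

lemma swap_swap[simp]: "swap_lbl i j (swap_lbl i j x) = x"
  by (simp add: swap_lbl_tau image_image)

lemma inj_tau: "inj (tau i j)"
  by (metis injI tau_tau)

lemma swap_inj: "swap_lbl i j x = swap_lbl i j y \<longleftrightarrow> x = y"
  by (metis swap_swap)

lemma swap_comm: "swap_lbl i j = swap_lbl j i"
  by (intro ext) (auto simp: swap_lbl_tau tau_def)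

lemma swap_same[simp]: "swap_lbl i i x = x"
  by (auto simp: swap_lbl_tau tau_def)

lemma swap_Un: "swap_lbl i j (x \<union> y) = swap_lbl i j x \<union> swap_lbl i j y"
  by (simp add: swap_lbl_tau image_Un)

lemma swap_fix: "i \<notin> z \<Longrightarrow> j \<notin> z \<Longrightarrow> swap_lbl i j z = z"
  by (auto simp: swap_lbl_tau tau_def image_def)

lemma swap_subset_iff: "i \<in> V \<Longrightarrow> j \<in> V \<Longrightarrow> swap_lbl i j x \<subseteq> V \<longleftrightarrow> x \<subseteq> V"
  by (auto simp: swap_lbl_tau tau_def split: if_splits)

lemma swap_subset_mono: "swap_lbl i j x \<subseteq> swap_lbl i j y \<longleftrightarrow> x \<subseteq> y"
  by (simp add: swap_lbl_tau inj_image_subset_iff inj_tau)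

lemma swap_diff: "swap_lbl i j (A - B) = swap_lbl i j A - swap_lbl i j B"
  by (simp add: swap_lbl_tau image_set_diff inj_tau)

lemma tau_comp: "i \<noteq> j \<Longrightarrow> j \<noteq> k \<Longrightarrow> i \<noteq> k \<Longrightarrow> tau i j m = tau i k (tau k j (tau i k m))"
  by (simp add: tau_def)

lemma swap_comp: "i \<noteq> j \<Longrightarrow> j \<noteq> k \<Longrightarrow> i \<noteq> k \<Longrightarrow>
   swap_lbl i j x = swap_lbl i k (swap_lbl k j (swap_lbl i k x))"
  by (simp add: swap_lbl_tau image_image tau_comp[symmetric])

definition invar :: "(nat set \<Rightarrow> nat set \<Rightarrow> complex) \<Rightarrow> nat \<Rightarrow> nat \<Rightarrow> bool" where
  "invar s i j \<longleftrightarrow> (\<forall>x y. s (swap_lbl i j x) y = s x y)"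

lemma invar_refl: "invar s i i" by (simp add: invar_def)
lemma invar_sym: "invar s i j \<Longrightarrow> invar s j i" by (simp add: invar_def swap_comm)

lemma invar_trans:
  assumes "invar s i k" "invar s k j"
  shows "invar s i j"
proof (cases "i = j \<or> j = k \<or> i = k")
  case True then show ?thesis using assms invar_refl by auto
next
  case False
  then show ?thesis using assms unfolding invar_def
    by (metis swap_comp)
qed

lemma invar_right: "herm s \<Longrightarrow> invar s i j \<Longrightarrow> s x (swap_lbl i j y) = s x y"
  unfolding herm_def invar_def by metis

lemma invar_both: "herm s \<Longrightarrow> invar s i j \<Longrightarrow> s (swap_lbl i j x) (swap_lbl i j y) = s x y"
  unfolding herm_def invar_def by metis

lemma sum_if_out: "(\<Sum>y\<in>A. if P then f y else 0) = (if P then (\<Sum>y\<in>A. f y) else 0)"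
  by auto

lemma sum_delta_mult: "finite A \<Longrightarrow> (\<Sum>x\<in>A. (f x :: complex) * (if x = a then 1 else 0)) = (if a \<in> A then f a else 0)"
proof -
  have "\<And>x. f x * (if x = a then 1 else 0) = (if x = a then f x else 0)" by simp
  moreover assume "finite A"
  ultimately show ?thesis by simp
qed

definition ev :: "nat set \<Rightarrow> nat set \<Rightarrow> complex" where
  "ev a = (\<lambda>x. if x = a then 1 else 0)"

lemma symmetric_invar:
  assumes "density n r" "symmetric_state n r" "i \<in> qubits n" "j \<in> qubits n"
  shows "invar r i j"
  unfolding invar_def
proof (intro allI)
  fix x y
  have op: "is_op (qubits n) r" using assms(1) by (simp add: density_def)
  show "r (swap_lbl i j x) y = r x y"
  proof (cases "y \<subseteq> qubits n")
    case True
    have "is_vec (qubits n) (ev y)" using True by (auto simp: is_vec_def ev_def)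
    then have s: "sym_vec n (apply_op n r (ev y))" using assms(2) by (simp add: symmetric_state_def)
    have a: "\<And>z. apply_op n r (ev y) z = r z y"
      using True by (simp add: apply_op_def ev_def sum_delta_mult)
    show ?thesis using s assms(3,4) unfolding sym_vec_def a by blast
  next
    case False then show ?thesis using op by (simp add: is_op_def)
  qed
qed

lemma qf_ev: "a \<in> Pow V \<Longrightarrow> finite V \<Longrightarrow> qf V s (ev a) = s a a"
proof -
  have "\<And>x y. cnj (ev a x) * s x y * ev a y = (if x = a then (if y = a then s x y else 0) else 0)"
    by (simp add: ev_def)
  moreover assume "a \<in> Pow V" "finite V"
  ultimately show ?thesis by (simp add: qf_def sum_if_out)
qed

lemma bil_ev_left: "a \<in> Pow V \<Longrightarrow> finite V \<Longrightarrow> bil V s (ev a) u = (\<Sum>y\<in>Pow V. s a y * u y)"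
proof -
  have "\<And>x y. cnj (ev a x) * s x y * u y = (if x = a then s x y * u y else 0)"
    by (simp add: ev_def)
  moreover assume "a \<in> Pow V" "finite V"
  ultimately show ?thesis by (simp add: bil_def sum_if_out)
qed

lemma bil_ev_ev: "a \<in> Pow V \<Longrightarrow> b \<in> Pow V \<Longrightarrow> finite V \<Longrightarrow> bil V s (ev a) (ev b) = s a b"
proof -
  have "\<And>y. s a y * ev b y = (if y = b then s a y else 0)"
    by (simp add: ev_def)
  moreover assume "a \<in> Pow V" "b \<in> Pow V" "finite V"
  ultimately show ?thesis by (simp add: bil_ev_left)
qed

lemma herm_diag_real: "herm s \<Longrightarrow> cnj (s x x) = s x x"
  unfolding herm_def by metis

lemma sum_swap_reindex:
  assumes "i \<in> V" "j \<in> V"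
  shows "(\<Sum>w\<in>Pow V. f (swap_lbl i j w)) = (\<Sum>w\<in>Pow V. f w)"
  by (rule sum.reindex_bij_witness[where i = "swap_lbl i j" and j = "swap_lbl i j"])
     (use assms swap_subset_iff in auto)

lemma ptr_invar:
  assumes "invar r i j" "i \<in> S" "j \<in> S" "S \<subseteq> V"
  shows "ptr V r S (swap_lbl i j x) y = ptr V r S x y"
proof (cases "x \<subseteq> S \<and> y \<subseteq> S")
  case True
  then have "swap_lbl i j x \<subseteq> S" using swap_subset_iff assms by blast
  moreover have "\<And>z. z \<in> Pow (V - S) \<Longrightarrow> swap_lbl i j x \<union> z = swap_lbl i j (x \<union> z)"
  proof -
    fix z assume "z \<in> Pow (V - S)"
    then have "i \<notin> z" "j \<notin> z" using assms by auto
    then show "swap_lbl i j x \<union> z = swap_lbl i j (x \<union> z)" by (simp add: swap_Un swap_fix)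
  qed
  ultimately show ?thesis using True assms(1) by (simp add: ptr_def invar_def)
next
  case False
  then have "\<not> (swap_lbl i j x \<subseteq> S \<and> y \<subseteq> S)" using swap_subset_iff assms by blast
  then show ?thesis using False by (simp add: ptr_out)
qed

lemma compat_invar:
  assumes fin: "finite V" and hs: "herm s" and ps: "psd V s" and os: "is_op V s"
    and SV: "S \<subseteq> V" and ij: "i \<in> S" "j \<in> S" and ir: "invar r i j"
    and eq: "ptr V s S = ptr V r S"
  shows "invar s i j"
proof -
  let ?P = "swap_lbl i j"
  have ijV: "i \<in> V" "j \<in> V" using ij SV by auto
  have finS: "finite S" "finite (V - S)" using fin SV finite_subset by auto
  have VS: "V = S \<union> (V - S)" using SV by auto
  have ps_inv: "\<And>x y. ptr V s S (?P x) y = ptr V s S x y"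
    using eq ptr_invar[OF ir ij SV] by metis
  have c: "(\<Sum>w\<in>Pow V. s (?P w) w) = (\<Sum>w\<in>Pow V. s w w)"
  proof -
    have "(\<Sum>w\<in>Pow V. s (?P w) w) = (\<Sum>a\<in>Pow S. \<Sum>b\<in>Pow (V - S). s (?P (a \<union> b)) (a \<union> b))"
      by (subst VS, rule sum_Pow_split) (use finS in auto)
    also have "\<dots> = (\<Sum>a\<in>Pow S. ptr V s S (?P a) a)"
    proof (rule sum.cong[OF refl])
      fix a assume a: "a \<in> Pow S"
      then have "?P a \<subseteq> S" using swap_subset_iff ij by blast
      moreover have "\<And>b. b \<in> Pow (V - S) \<Longrightarrow> ?P (a \<union> b) = ?P a \<union> b"
      proof -
        fix b assume "b \<in> Pow (V - S)"
        then have "i \<notin> b" "j \<notin> b" using ij by auto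
        then show "?P (a \<union> b) = ?P a \<union> b" by (simp add: swap_Un swap_fix)
      qed
      ultimately show "(\<Sum>b\<in>Pow (V - S). s (?P (a \<union> b)) (a \<union> b)) = ptr V s S (?P a) a"
        using a by (simp add: ptr_def)
    qed
    also have "\<dots> = (\<Sum>a\<in>Pow S. ptr V s S a a)" using ps_inv by simp
    also have "\<dots> = (\<Sum>a\<in>Pow S. \<Sum>b\<in>Pow (V - S). s (a \<union> b) (a \<union> b))"
      by (simp add: ptr_def)
    also have "\<dots> = (\<Sum>w\<in>Pow V. s w w)"
      by (subst VS, rule sum_Pow_split[symmetric]) (use finS in auto)
    finally show ?thesis .
  qed
  have d: "(\<Sum>w\<in>Pow V. s w (?P w)) = (\<Sum>w\<in>Pow V. s w w)"
  proof -
    have "(\<Sum>w\<in>Pow V. s w (?P w)) = (\<Sum>w\<in>Pow V. cnj (s (?P w) w))"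
      using hs unfolding herm_def by metis
    also have "\<dots> = cnj (\<Sum>w\<in>Pow V. s w w)" using c by (simp add: cnj_sum[symmetric] del: cnj_sum)
    also have "\<dots> = (\<Sum>w\<in>Pow V. s w w)"
      using herm_diag_real[OF hs] by simp
    finally show ?thesis .
  qed
  have e: "(\<Sum>w\<in>Pow V. s (?P w) (?P w)) = (\<Sum>w\<in>Pow V. s w w)"
    using sum_swap_reindex[OF ijV, of "\<lambda>w. s w w"] by simp
  define u where "u w = (\<lambda>x. ev w x + (-1) * ev (?P w) x)" for w
  have PwV: "\<And>w. w \<in> Pow V \<Longrightarrow> ?P w \<in> Pow V" using swap_subset_iff ijV by blast
  have f: "\<And>w. w \<in> Pow V \<Longrightarrow> qf V s (u w) = s w w - s w (?P w) - s (?P w) w + s (?P w) (?P w)"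
    unfolding u_def qf_add using fin PwV by (simp add: qf_ev bil_ev_ev)
  have g: "(\<Sum>w\<in>Pow V. qf V s (u w)) = 0"
    using c d e f by (simp add: sum.distrib sum_subtractf)
  have h: "\<And>w. w \<in> Pow V \<Longrightarrow> qf V s (u w) = 0"
  proof -
    fix w assume w: "w \<in> Pow V"
    have nn: "\<And>w. Re (qf V s (u w)) \<ge> 0" and im: "\<And>w. Im (qf V s (u w)) = 0"
      using ps unfolding psd_def by auto
    have "(\<Sum>w\<in>Pow V. Re (qf V s (u w))) = 0" using g by (metis Re_sum zero_complex.sel(1))
    then have "Re (qf V s (u w)) = 0"
      using sum_nonneg_eq_0_iff[of "Pow V" "\<lambda>w. Re (qf V s (u w))"] nn fin w by simp
    then show "qf V s (u w) = 0" using im by (simp add: complex_eq_iff)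
  qed
  have k: "\<And>x w. s x (?P w) = s x w"
  proof -
    fix x w
    show "s x (?P w) = s x w"
    proof (cases "x \<in> Pow V \<and> w \<in> Pow V")
      case True
      have "bil V s (ev x) (u w) = 0" using psd_kernel[OF ps h] True by blast
      moreover have "bil V s (ev x) (u w) = s x w - s x (?P w)"
      proof -
        have "bil V s (ev x) (u w) = (\<Sum>y\<in>Pow V. s x y * ev w y + (-1) * (s x y * ev (?P w) y))"
          using True fin by (simp add: bil_ev_left u_def algebra_simps)
        also have "\<dots> = s x w - s x (?P w)"
          using True PwV[of w] fin by (simp add: sum_subtractf ev_def sum_delta_mult del: mult_cancel_left1 mult_cancel_right1)
        finally show ?thesis .
      qed
      ultimately show ?thesis by simp
    next
      case False
      then have "\<not> (x \<subseteq> V \<and> ?P w \<subseteq> V)" "\<not> (x \<subseteq> V \<and> w \<subseteq> V)" using swap_subset_iff ijV by auto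
      then show ?thesis using os unfolding is_op_def by metis
    qed
  qed
  show ?thesis unfolding invar_def using hs k unfolding herm_def by metis
qed

definition fsym :: "nat set \<Rightarrow> (nat set \<Rightarrow> nat set \<Rightarrow> complex) \<Rightarrow> bool" where
  "fsym V s \<longleftrightarrow> (\<forall>i\<in>V. \<forall>j\<in>V. \<forall>x y. s (swap_lbl i j x) (swap_lbl i j y) = s x y)"

lemma swap_V: "i \<in> V \<Longrightarrow> j \<in> V \<Longrightarrow> swap_lbl i j V = V"
  by (auto simp: swap_lbl_tau tau_def image_def)

lemma swap_subset_swap: "x \<subseteq> swap_lbl i j y \<longleftrightarrow> swap_lbl i j x \<subseteq> y"
  by (metis swap_subset_mono swap_swap)

lemma ptr_swap:
  assumes ij: "i \<in> V" "j \<in> V" and sy: "\<And>x y. s (swap_lbl i j x) (swap_lbl i j y) = s x y"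
  shows "ptr V s (swap_lbl i j T) (swap_lbl i j x) (swap_lbl i j y) = ptr V s T x y"
proof (cases "x \<subseteq> T \<and> y \<subseteq> T")
  case True
  let ?P = "swap_lbl i j"
  have sub: "?P x \<subseteq> ?P T" "?P y \<subseteq> ?P T" using True swap_subset_mono by blast+
  have VT: "V - ?P T = ?P (V - T)" using swap_V[OF ij] by (simp add: swap_diff)
  have "(\<Sum>z\<in>Pow (V - ?P T). s (?P x \<union> z) (?P y \<union> z)) = (\<Sum>z\<in>Pow (V - T). s (?P x \<union> ?P z) (?P y \<union> ?P z))"
    unfolding VT
    apply (rule sum.reindex_bij_witness[where i = "?P" and j = "?P"])
        apply simp
       apply (simp only: Pow_iff swap_subset_swap[symmetric] swap_swap)
      apply simp
     apply (simp only: Pow_iff swap_subset_mono)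
    apply simp
    done
  also have "\<dots> = (\<Sum>z\<in>Pow (V - T). s (x \<union> z) (y \<union> z))"
    by (simp add: swap_Un[symmetric] sy)
  finally show ?thesis using True sub by (simp add: ptr_def)
next
  case False
  then have "\<not> (swap_lbl i j x \<subseteq> swap_lbl i j T \<and> swap_lbl i j y \<subseteq> swap_lbl i j T)"
    using swap_subset_mono by blast
  then show ?thesis using False by (simp add: ptr_out)
qed

lemma swap_in_out: "t \<in> T \<Longrightarrow> s \<notin> T \<Longrightarrow> swap_lbl t s T = insert s (T - {t})"
  by (auto simp: swap_lbl_tau tau_def image_def split: if_splits)

lemma transport:
  assumes fin: "finite V" and fs: "fsym V s" and fr: "fsym V r"
    and SV: "S \<subseteq> V" and eq: "ptr V s S = ptr V r S"
  shows "T \<subseteq> V \<Longrightarrow> card T \<le> card S \<Longrightarrow> ptr V s T = ptr V r T"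
proof (induction "card (T - S)" arbitrary: T rule: less_induct)
  case less
  show ?case
  proof (cases "T \<subseteq> S")
    case True then show ?thesis using ptr_eq_sub[OF fin True SV eq] by simp
  next
    case False
    then obtain t where t: "t \<in> T" "t \<notin> S" by blast
    have finS: "finite S" "finite T" using fin SV less.prems finite_subset by auto
    have "\<not> S \<subseteq> T"
    proof
      assume "S \<subseteq> T"
      then have "S = T" using card_subset_eq[OF finS(2)] less.prems by (meson le_antisym card_mono finS(2))
      then show False using False by simp
    qed
    then obtain u where u: "u \<in> S" "u \<notin> T" by blast
    define T' where "T' = swap_lbl t u T"
    have T'e: "T' = insert u (T - {t})" using swap_in_out[OF t(1) u(2)] T'_def by simp
    have "T' - S = (T - S) - {t}" using T'e u t by auto
    moreover have "card (T - S) > 0" using t finS by (auto simp: card_gt_0_iff)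
    ultimately have lt: "card (T' - S) < card (T - S)" using t finS by simp
    have "card T > 0" using t finS by (auto simp: card_gt_0_iff)
    then have cT: "card T' = card T" using T'e t u finS by (simp add: card_insert_if)
    have T'V: "T' \<subseteq> V" using T'e less.prems SV u by auto
    have IH: "ptr V s T' = ptr V r T'" using less.hyps[OF lt] T'V cT less.prems by simp
    have tuV: "t \<in> V" "u \<in> V" using t less.prems u SV by auto
    show ?thesis
    proof (intro ext)
      fix x y
      have "ptr V s T x y = ptr V s T' (swap_lbl t u x) (swap_lbl t u y)"
        unfolding T'_def by (rule ptr_swap[symmetric]) (use tuV fs in \<open>auto simp: fsym_def\<close>)
      also have "\<dots> = ptr V r T' (swap_lbl t u x) (swap_lbl t u y)" using IH by simp
      also have "\<dots> = ptr V r T x y"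
        unfolding T'_def by (rule ptr_swap) (use tuV fr in \<open>auto simp: fsym_def\<close>)
      finally show "ptr V s T x y = ptr V r T x y" .
    qed
  qed
qed

definition mchain :: "nat \<Rightarrow> nat \<Rightarrow> nat \<Rightarrow> nat" where
  "mchain n L t = min (t * (L - 1)) (n - L)"

definition Sset :: "nat \<Rightarrow> nat \<Rightarrow> nat \<Rightarrow> nat set" where
  "Sset n L t = {mchain n L t + 1 .. mchain n L t + L}"

lemma Sset_sub: "L \<le> n \<Longrightarrow> Sset n L t \<subseteq> qubits n"
  by (auto simp: Sset_def qubits_def mchain_def)

lemma Sset_card: "card (Sset n L t) = L"
  by (simp add: Sset_def)

lemma chain_conn:
  assumes L: "2 \<le> L" "L \<le> n" and c: "n - 1 \<le> c * (L - 1)" "1 \<le> c"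
    and Rsym: "\<And>i j. R i j \<Longrightarrow> R j i"
    and Rtrans: "\<And>i j k. R i k \<Longrightarrow> R k j \<Longrightarrow> R i j"
    and Rset: "\<And>t i j. t < c \<Longrightarrow> i \<in> Sset n L t \<Longrightarrow> j \<in> Sset n L t \<Longrightarrow> R i j"
  shows "\<And>i. i \<in> qubits n \<Longrightarrow> R i 1"
proof -
  have step: "\<And>t. t < c \<Longrightarrow> \<forall>i. 1 \<le> i \<and> i \<le> mchain n L t + L \<longrightarrow> R i 1"
  proof -
    fix t show "t < c \<Longrightarrow> \<forall>i. 1 \<le> i \<and> i \<le> mchain n L t + L \<longrightarrow> R i 1"
    proof (induction t)
      case 0
      then show ?case using Rset[of 0] by (auto simp: Sset_def mchain_def)
    next
      case (Suc t)
      have IH: "\<forall>i. 1 \<le> i \<and> i \<le> mchain n L t + L \<longrightarrow> R i 1" using Suc by simp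
      have m1: "mchain n L (Suc t) \<le> mchain n L t + L - 1"
        and m2: "mchain n L t \<le> mchain n L (Suc t)"
        using L by (auto simp: mchain_def algebra_simps)
      show ?case
      proof (intro allI impI)
        fix i assume i: "1 \<le> i \<and> i \<le> mchain n L (Suc t) + L"
        show "R i 1"
        proof (cases "i \<le> mchain n L t + L")
          case True then show ?thesis using IH i by blast
        next
          case False
          define j where "j = mchain n L (Suc t) + 1"
          have "i \<in> Sset n L (Suc t)" "j \<in> Sset n L (Suc t)"
            using i False m1 m2 L unfolding Sset_def j_def by auto
          then have "R i j" using Rset Suc.prems by blast
          moreover have "R j 1" using IH m1 L unfolding j_def by auto
          ultimately show ?thesis using Rtrans by blast
        qed
      qed
    qed
  qed
  have last: "n \<le> mchain n L (c - 1) + L"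
  proof -
    obtain c' L' where cL: "c = Suc c'" "L = Suc L'" using c L by (cases c; cases L) auto
    have "(c - 1) * (L - 1) + L = c * (L - 1) + 1" unfolding cL by simp
    then show ?thesis using c L unfolding mchain_def by auto
  qed
  fix i assume "i \<in> qubits n"
  then show "R i 1" using step[of "c - 1"] c last by (auto simp: qubits_def)
qed

definition is_part :: "'a set set \<Rightarrow> 'a set \<Rightarrow> bool" where
  "is_part P U \<longleftrightarrow> \<Union>P = U \<and> (\<forall>B\<in>P. B \<noteq> {}) \<and> (\<forall>B\<in>P. \<forall>C\<in>P. B \<noteq> C \<longrightarrow> B \<inter> C = {})"

lemma part_exists:
  fixes U :: "'a set"
  assumes "finite U"
  shows "finite F \<Longrightarrow> (\<forall>S\<in>F. S \<subseteq> U \<and> S \<noteq> {}) \<Longrightarrow>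
    \<exists>P. is_part P U \<and> card U \<le> card P + (\<Sum>S\<in>F. card S - 1) \<and> (\<forall>S\<in>F. \<exists>B\<in>P. S \<subseteq> B)"
proof (induction F rule: finite_induct)
  case empty
  have "inj_on (\<lambda>x. {x}) U" by (auto simp: inj_on_def)
  then have "card ((\<lambda>x. {x}) ` U) = card U" by (simp add: card_image)
  moreover have "is_part ((\<lambda>x. {x}) ` U) U" by (auto simp: is_part_def)
  ultimately show ?case by (metis empty_iff le_refl add_0_right sum.empty)
next
  case (insert S F)
  then obtain P where P: "is_part P U" "card U \<le> card P + (\<Sum>S\<in>F. card S - 1)" "\<forall>S\<in>F. \<exists>B\<in>P. S \<subseteq> B"
    by auto
  have SU: "S \<subseteq> U" "S \<noteq> {}" using insert.prems by auto
  have finP: "finite P" using P(1) assms unfolding is_part_def by (metis finite_UnionD)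
  define M where "M = {B\<in>P. B \<inter> S \<noteq> {}}"
  define P' where "P' = (P - M) \<union> {\<Union>M}"
  have blk: "\<And>s. s \<in> U \<Longrightarrow> \<exists>B\<in>P. s \<in> B" using P(1) unfolding is_part_def by blast
  have disj: "\<And>B C s. B \<in> P \<Longrightarrow> C \<in> P \<Longrightarrow> s \<in> B \<Longrightarrow> s \<in> C \<Longrightarrow> B = C"
    using P(1) unfolding is_part_def by blast
  have SM: "S \<subseteq> \<Union>M"
  proof
    fix s assume "s \<in> S"
    then obtain B where "B \<in> P" "s \<in> B" using blk SU by blast
    then show "s \<in> \<Union>M" using \<open>s \<in> S\<close> unfolding M_def by blast
  qed
  have UMne: "\<Union>M \<noteq> {}" using SM SU by blast
  have UMnot: "\<Union>M \<notin> P - M"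
  proof
    assume a: "\<Union>M \<in> P - M"
    obtain s where "s \<in> S" using SU by blast
    then have "s \<in> \<Union>M" using SM by blast
    then show False using a unfolding M_def by blast
  qed
  have MP: "M \<subseteq> P" unfolding M_def by blast
  have finM: "finite M" using finP MP finite_subset by blast
  have cardM: "card M \<le> card S"
  proof -
    define f where "f s = (THE B. B \<in> P \<and> s \<in> B)" for s
    have f: "\<And>s B. B \<in> P \<Longrightarrow> s \<in> B \<Longrightarrow> f s = B"
      unfolding f_def using disj by (rule_tac the_equality) auto
    have "M \<subseteq> f ` S"
    proof
      fix B assume "B \<in> M"
      then obtain s where "s \<in> B" "s \<in> S" "B \<in> P" unfolding M_def by blast
      then show "B \<in> f ` S" using f by blast
    qed
    then show ?thesis using insert.hyps SU card_image_le
      by (metis card_mono finite_imageI finite_subset order_trans assms)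
  qed
  have Mne: "M \<noteq> {}" using UMne by auto
  have cardM1: "card M \<ge> 1" using Mne finM by (simp add: Suc_le_eq card_gt_0_iff)
  have cardP': "card P' = card P - card M + 1"
    unfolding P'_def using UMnot finP finM MP
    by (simp add: card_Diff_subset)
  have cardMP: "card M \<le> card P" using finP MP card_mono by blast
  have UP: "\<Union>P = U" and neP: "\<forall>B\<in>P. B \<noteq> {}" and djP: "\<forall>B\<in>P. \<forall>C\<in>P. B \<noteq> C \<longrightarrow> B \<inter> C = {}"
    using P(1) unfolding is_part_def by auto
  have dj2: "\<And>C. C \<in> P - M \<Longrightarrow> C \<inter> \<Union>M = {}"
  proof -
    fix C assume C: "C \<in> P - M"
    show "C \<inter> \<Union>M = {}"
    proof (rule ccontr)
      assume "C \<inter> \<Union>M \<noteq> {}"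
      then obtain x B' where "x \<in> C" "x \<in> B'" "B' \<in> M" by blast
      then have "C = B'" using disj[of C B' x] C MP by blast
      then show False using C \<open>B' \<in> M\<close> by blast
    qed
  qed
  have part': "is_part P' U"
    unfolding is_part_def
  proof (intro conjI)
    show "\<Union>P' = U" unfolding P'_def using UP MP by auto
    show "\<forall>B\<in>P'. B \<noteq> {}" unfolding P'_def using neP UMne by auto
    show "\<forall>B\<in>P'. \<forall>C\<in>P'. B \<noteq> C \<longrightarrow> B \<inter> C = {}"
    proof (intro ballI impI)
      fix B C assume B: "B \<in> P'" and C: "C \<in> P'" and ne: "B \<noteq> C"
      consider "B = \<Union>M" "C \<in> P - M" | "C = \<Union>M" "B \<in> P - M" | "B \<in> P - M" "C \<in> P - M"
        using B C ne unfolding P'_def by auto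
      then show "B \<inter> C = {}"
      proof cases
        case 1 then show ?thesis using dj2[of C] by auto
      next
        case 2 then show ?thesis using dj2[of B] by auto
      next
        case 3 then show ?thesis using djP ne by auto
      qed
    qed
  qed
  have sumI: "(\<Sum>S\<in>insert S F. card S - 1) = (card S - 1) + (\<Sum>S\<in>F. card S - 1)"
    using insert.hyps by simp
  have cS: "card S \<ge> 1" using SU insert.prems assms finite_subset
    by (metis One_nat_def Suc_leI card_gt_0_iff)
  have ineq: "card U \<le> card P' + (\<Sum>S\<in>insert S F. card S - 1)"
    using P(2) cardP' sumI cardM cardM1 cardMP cS by linarith
  have cov: "\<forall>S'\<in>insert S F. \<exists>B\<in>P'. S' \<subseteq> B"
  proof
    fix S' assume "S' \<in> insert S F"
    then show "\<exists>B\<in>P'. S' \<subseteq> B"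
    proof
      assume "S' = S" then show ?thesis using SM unfolding P'_def by blast
    next
      assume "S' \<in> F"
      then obtain B where "B \<in> P" "S' \<subseteq> B" using P(3) by blast
      then show ?thesis unfolding P'_def by (cases "B \<in> M") auto
    qed
  qed
  show ?case using part' ineq cov by blast
qed

lemma split_exists:
  fixes U :: "'a set"
  assumes "finite U" "finite F" "\<forall>S\<in>F. S \<subseteq> U \<and> S \<noteq> {}"
    and "(\<Sum>S\<in>F. card S - 1) + 1 < card U"
  shows "\<exists>A. A \<noteq> {} \<and> A \<subseteq> U \<and> A \<noteq> U \<and> (\<forall>S\<in>F. S \<subseteq> A \<or> S \<inter> A = {})"
proof -
  obtain P where P: "is_part P U" "card U \<le> card P + (\<Sum>S\<in>F. card S - 1)" "\<forall>S\<in>F. \<exists>B\<in>P. S \<subseteq> B"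
    using part_exists[OF assms(1-3)] by blast
  have "card P \<ge> 2" using P(2) assms(4) by linarith
  moreover have "finite P" using P(1) assms(1) unfolding is_part_def by (metis finite_UnionD)
  ultimately have "\<not> (\<forall>a1 \<in> P. \<forall>a2 \<in> P. a1 = a2)" using card_le_Suc0_iff_eq[of P] by linarith
  then obtain B1 B2 where B: "B1 \<in> P" "B2 \<in> P" "B1 \<noteq> B2" by blast
  have props: "B1 \<noteq> {}" "B2 \<noteq> {}" "B1 \<inter> B2 = {}" "B1 \<subseteq> U" "B2 \<subseteq> U"
    using P(1) B unfolding is_part_def by blast+
  have "B1 \<noteq> U" using props by blast
  moreover have "\<forall>S\<in>F. S \<subseteq> B1 \<or> S \<inter> B1 = {}"
  proof
    fix S assume "S \<in> F"
    then obtain B where "B \<in> P" "S \<subseteq> B" using P(3) by blast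
    then show "S \<subseteq> B1 \<or> S \<inter> B1 = {}"
      using P(1) B(1) unfolding is_part_def by (cases "B = B1") blast+
  qed
  ultimately show ?thesis using props by blast
qed

definition qfX :: "nat set set \<Rightarrow> (nat set \<Rightarrow> nat set \<Rightarrow> complex) \<Rightarrow> (nat set \<Rightarrow> complex) \<Rightarrow> complex" where
  "qfX X r v = (\<Sum>x\<in>X. \<Sum>y\<in>X. cnj (v x) * r x y * v y)"

definition bilX :: "nat set set \<Rightarrow> (nat set \<Rightarrow> nat set \<Rightarrow> complex) \<Rightarrow> (nat set \<Rightarrow> complex) \<Rightarrow> (nat set \<Rightarrow> complex) \<Rightarrow> complex" where
  "bilX X r u w = (\<Sum>x\<in>X. \<Sum>y\<in>X. cnj (u x) * r x y * w y)"

definition psdX :: "nat set set \<Rightarrow> (nat set \<Rightarrow> nat set \<Rightarrow> complex) \<Rightarrow> bool" where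
  "psdX X r \<longleftrightarrow> (\<forall>v. Im (qfX X r v) = 0 \<and> Re (qfX X r v) \<ge> 0)"

lemma qf_qfX: "qf V r v = qfX (Pow V) r v" by (simp add: qf_def qfX_def)
lemma psd_psdX: "psd V r = psdX (Pow V) r" by (simp add: psd_def psdX_def qf_qfX)

lemma qfX_add:
  "qfX V r (\<lambda>x. u x + c * w x) = qfX V r u + c * bilX V r u w + cnj c * bilX V r w u + (c * cnj c) * qfX V r w"
  unfolding qfX_def bilX_def
  by (simp add: algebra_simps sum.distrib sum_distrib_left)

lemma psdX_kernel:
  assumes "psdX V r" "qfX V r u = 0"
  shows "bilX V r w u = 0"
proof -
  define b1 where "b1 = bilX V r u w"
  define b2 where "b2 = bilX V r w u"
  define d where "d = qfX V r w"
  have dr: "Im d = 0" using assms(1) unfolding psdX_def d_def by blast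
  have q: "\<And>c. qfX V r (\<lambda>x. u x + c * w x) = c * b1 + cnj c * b2 + (c * cnj c) * d"
    using qfX_add assms(2) unfolding b1_def b2_def d_def by simp
  have P: "\<And>c. Im (c * b1 + cnj c * b2 + (c * cnj c) * d) = 0 \<and> Re (c * b1 + cnj c * b2 + (c * cnj c) * d) \<ge> 0"
    using assms(1) q unfolding psdX_def by metis
  have 1: "Re (b1 + b2) = 0"
  proof (rule real_quad_aux[where d = "Re d"])
    fix t :: real
    show "0 \<le> t * Re (b1 + b2) + t\<^sup>2 * Re d"
      using P[of "complex_of_real t"] dr by (simp add: power2_eq_square algebra_simps)
  qed
  have 2: "Im (b1 + b2) = 0"
    using P[of 1] dr by simp
  have 3: "Im (b1 - b2) = 0"
  proof -
    have "- Im (b1 - b2) = 0"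
    proof (rule real_quad_aux[where d = "Re d"])
      fix t :: real
      show "0 \<le> t * (- Im (b1 - b2)) + t\<^sup>2 * Re d"
        using P[of "\<i> * complex_of_real t"] dr by (simp add: power2_eq_square algebra_simps)
    qed
    then show ?thesis by simp
  qed
  have 4: "Re (b1 - b2) = 0"
    using P[of "\<i>"] dr by (simp add: algebra_simps)
  show ?thesis using 1 2 3 4 unfolding b2_def[symmetric] by (simp add: complex_eq_iff)
qed

lemma qfX_ev: "a \<in> X \<Longrightarrow> finite X \<Longrightarrow> qfX X s (ev a) = s a a"
proof -
  have "\<And>x y. cnj (ev a x) * s x y * ev a y = (if x = a then (if y = a then s x y else 0) else 0)"
    by (simp add: ev_def)
  moreover assume "a \<in> X" "finite X"
  ultimately show ?thesis by (simp add: qfX_def sum_if_out)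
qed

lemma bilX_ev_ev: "a \<in> X \<Longrightarrow> b \<in> X \<Longrightarrow> finite X \<Longrightarrow> bilX X s (ev a) (ev b) = s a b"
proof -
  have "\<And>x y. cnj (ev a x) * s x y * ev b y = (if x = a then (if y = b then s x y else 0) else 0)"
    by (simp add: ev_def)
  moreover assume "a \<in> X" "b \<in> X" "finite X"
  ultimately show ?thesis by (simp add: bilX_def sum_if_out)
qed

lemma qfX_insert_v0:
  assumes "finite X" "a \<notin> X" "v a = 0"
  shows "qfX (insert a X) r v = qfX X r v"
  using assms by (simp add: qfX_def)

lemma qfX_insert_r0:
  assumes "finite X" "a \<notin> X" "\<And>y. r a y = 0" "\<And>x. r x a = 0"
  shows "qfX (insert a X) r v = qfX X r v"
  using assms by (simp add: qfX_def)

lemma qfX_cong: "(\<And>x. x \<in> X \<Longrightarrow> v x = w x) \<Longrightarrow> qfX X r v = qfX X r w"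
  unfolding qfX_def by (intro sum.cong refl) auto

lemma qfX_rank1:
  assumes "\<And>x y. x \<in> X \<Longrightarrow> y \<in> X \<Longrightarrow> r x y = (\<Sum>j\<in>J. f j x * cnj (f j y))"
  shows "qfX X r v = (\<Sum>j\<in>J. cnj (\<Sum>y\<in>X. cnj (f j y) * v y) * (\<Sum>y\<in>X. cnj (f j y) * v y))"
proof -
  have "qfX X r v = (\<Sum>x\<in>X. \<Sum>y\<in>X. \<Sum>j\<in>J. (cnj (v x) * f j x) * (cnj (f j y) * v y))"
    unfolding qfX_def using assms by (simp add: sum_distrib_left sum_distrib_right mult.assoc mult.left_commute)
  also have "\<dots> = (\<Sum>j\<in>J. (\<Sum>x\<in>X. cnj (v x) * f j x) * (\<Sum>y\<in>X. cnj (f j y) * v y))"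
    by (simp add: sum_product sum.swap[of _ J] sum.swap[of _ J X])
  also have "\<dots> = (\<Sum>j\<in>J. cnj (\<Sum>y\<in>X. cnj (f j y) * v y) * (\<Sum>y\<in>X. cnj (f j y) * v y))"
    by (simp add: mult.commute)
  finally show ?thesis .
qed

lemma cnj_mult_self: "cnj z * z = complex_of_real ((cmod z)\<^sup>2)"
  by (metis complex_norm_square mult.commute)

lemma rank1_psdX:
  assumes "\<And>x y. x \<in> X \<Longrightarrow> y \<in> X \<Longrightarrow> r x y = (\<Sum>j\<in>J. f j x * cnj (f j y))"
  shows "psdX X r"
  unfolding psdX_def
proof
  fix v
  have "qfX X r v = (\<Sum>j\<in>J. complex_of_real ((cmod (\<Sum>y\<in>X. cnj (f j y) * v y))\<^sup>2))"
    by (simp only: qfX_rank1[OF assms] cnj_mult_self)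
  also have "\<dots> = complex_of_real (\<Sum>j\<in>J. (cmod (\<Sum>y\<in>X. cnj (f j y) * v y))\<^sup>2)"
    by (simp only: of_real_sum)
  finally have "qfX X r v = complex_of_real (\<Sum>j\<in>J. (cmod (\<Sum>y\<in>X. cnj (f j y) * v y))\<^sup>2)" .
  then show "Im (qfX X r v) = 0 \<and> Re (qfX X r v) \<ge> 0"
    by (simp add: sum_nonneg)
qed

lemma psdX_insert_sub:
  assumes "finite X" "a \<notin> X" "psdX (insert a X) r"
  shows "psdX X r"
  unfolding psdX_def
proof
  fix v
  have "qfX X r v = qfX X r (v(a := 0))" by (rule qfX_cong) (use assms in auto)
  also have "\<dots> = qfX (insert a X) r (v(a := 0))" by (rule qfX_insert_v0[symmetric]) (use assms in auto)
  finally show "Im (qfX X r v) = 0 \<and> Re (qfX X r v) \<ge> 0" using assms(3) unfolding psdX_def by metis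
qed

lemma qfX_plus_rank1:
  "qfX X (\<lambda>x y. r x y + g x * cnj (g y)) v = qfX X r v + cnj (\<Sum>y\<in>X. cnj (g y) * v y) * (\<Sum>y\<in>X. cnj (g y) * v y)"
proof -
  have "qfX X (\<lambda>x y. g x * cnj (g y)) v = (\<Sum>j\<in>{0::nat}. cnj (\<Sum>y\<in>X. cnj (g y) * v y) * (\<Sum>y\<in>X. cnj (g y) * v y))"
    by (rule qfX_rank1[where f = "\<lambda>_. g"]) simp
  moreover have "qfX X (\<lambda>x y. r x y + g x * cnj (g y)) v = qfX X r v + qfX X (\<lambda>x y. g x * cnj (g y)) v"
    unfolding qfX_def by (simp add: algebra_simps sum.distrib)
  ultimately show ?thesis by simp
qed

lemma cholesky:
  "finite X \<Longrightarrow> herm r \<Longrightarrow> psdX X r \<Longrightarrow>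
   \<exists>k (f :: nat \<Rightarrow> nat set \<Rightarrow> complex). \<forall>x\<in>X. \<forall>y\<in>X. r x y = (\<Sum>i<k. f i x * cnj (f i y))"
proof (induction X arbitrary: r rule: finite_induct)
  case empty then show ?case by auto
next
  case (insert a X)
  have hr: "herm r" and pr: "psdX (insert a X) r" using insert.prems by auto
  have pX: "psdX X r" using psdX_insert_sub[OF insert.hyps(1,2) pr] .
  have finI: "finite (insert a X)" using insert.hyps by simp
  have qa: "qfX (insert a X) r (ev a) = r a a" using qfX_ev[of a "insert a X" r] finI by simp
  have raa: "Im (r a a) = 0" "Re (r a a) \<ge> 0"
    using pr unfolding psdX_def qa[symmetric] by auto
  show ?case
  proof (cases "r a a = 0")
    case True
    have q0: "qfX (insert a X) r (ev a) = 0" using True qfX_ev[of a "insert a X" r] finI by simp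
    have col: "\<And>y. y \<in> insert a X \<Longrightarrow> r y a = 0"
    proof -
      fix y assume y: "y \<in> insert a X"
      have "bilX (insert a X) r (ev y) (ev a) = 0" using psdX_kernel[OF pr q0] by blast
      then show "r y a = 0" using bilX_ev_ev[of y "insert a X" a r] finI y by simp
    qed
    have row: "\<And>y. y \<in> insert a X \<Longrightarrow> r a y = 0"
    proof -
      fix y assume "y \<in> insert a X"
      then have "r y a = 0" using col by blast
      moreover have "r a y = cnj (r y a)" using hr unfolding herm_def by blast
      ultimately show "r a y = 0" by simp
    qed
    obtain k :: nat and f :: "nat \<Rightarrow> nat set \<Rightarrow> complex" where f: "\<forall>x\<in>X. \<forall>y\<in>X. r x y = (\<Sum>i<k. f i x * cnj (f i y))"
      using insert.IH[OF hr pX] by blast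
    define f' where "f' i x = (if x = a then 0 else f i x)" for i x
    show ?thesis
    proof (intro exI ballI)
      fix x y assume x: "x \<in> insert a X" and y: "y \<in> insert a X"
      show "r x y = (\<Sum>i<k. f' i x * cnj (f' i y))"
      proof (cases "x = a \<or> y = a")
        case True
        then have "\<And>i. f' i x * cnj (f' i y) = 0" by (auto simp: f'_def)
        then have "(\<Sum>i<k. f' i x * cnj (f' i y)) = 0" by (simp del: mult_eq_0_iff)
        moreover have "r x y = 0" using True row col x y by blast
        ultimately show ?thesis by simp
      next
        case False
        then have "\<And>i. f' i x * cnj (f' i y) = f i x * cnj (f i y)" by (simp add: f'_def)
        then show ?thesis using f x y False by simp
      qed
    qed
  next
    case False
    have Rpos: "Re (r a a) > 0" using False raa by (simp add: complex_eq_iff)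
    define d where "d = sqrt (Re (r a a))"
    have dpos: "d > 0" using Rpos by (simp add: d_def)
    have raad: "r a a = complex_of_real d * complex_of_real d"
      using raa Rpos unfolding d_def by (simp add: complex_eq_iff)
    define v0 where "v0 x = r x a / complex_of_real d" for x
    define r' where "r' x y = r x y - v0 x * cnj (v0 y)" for x y
    have hr': "herm r'" unfolding herm_def
    proof (intro allI)
      fix x y
      have "r y x = cnj (r x y)" using hr unfolding herm_def by blast
      then show "r' y x = cnj (r' x y)" unfolding r'_def by simp
    qed
    have v0a: "v0 a = complex_of_real d" using raad dpos unfolding v0_def by simp
    have r'row: "\<And>y. r' a y = 0"
    proof -
      fix y
      have "cnj (r y a) = r a y" using hr unfolding herm_def by metis
      then show "r' a y = 0" unfolding r'_def v0a v0_def using dpos raad by simp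
    qed
    have r'col: "\<And>x. r' x a = 0"
    proof -
      fix x
      have "r' x a = cnj (r' a x)" using hr' unfolding herm_def by blast
      then show "r' x a = 0" using r'row by simp
    qed
    have pX': "psdX X r'"
      unfolding psdX_def
    proof
      fix v
      define s0 where "s0 = (\<Sum>y\<in>X. cnj (v0 y) * v y)"
      define v' where "v' = v(a := - s0 / complex_of_real d)"
      have s: "(\<Sum>y\<in>insert a X. cnj (v0 y) * v' y) = 0"
      proof -
        have "(\<Sum>y\<in>insert a X. cnj (v0 y) * v' y) = cnj (v0 a) * v' a + (\<Sum>y\<in>X. cnj (v0 y) * v' y)"
          using insert.hyps by simp
        also have "(\<Sum>y\<in>X. cnj (v0 y) * v' y) = s0"
          unfolding s0_def v'_def using insert.hyps by (intro sum.cong) auto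
        finally show ?thesis using dpos unfolding v0a v'_def by simp
      qed
      have rr: "r = (\<lambda>x y. r' x y + v0 x * cnj (v0 y))" unfolding r'_def by simp
      have "qfX (insert a X) r v' = qfX (insert a X) r' v'"
        using qfX_plus_rank1[of "insert a X" r' v0 v'] s rr by simp
      also have "\<dots> = qfX X r' v'" by (rule qfX_insert_r0) (use insert.hyps r'row r'col in auto)
      also have "\<dots> = qfX X r' v" by (rule qfX_cong) (use insert.hyps in \<open>auto simp: v'_def\<close>)
      finally show "Im (qfX X r' v) = 0 \<and> Re (qfX X r' v) \<ge> 0" using pr unfolding psdX_def by metis
    qed
    obtain k :: nat and f :: "nat \<Rightarrow> nat set \<Rightarrow> complex" where f: "\<forall>x\<in>X. \<forall>y\<in>X. r' x y = (\<Sum>i<k. f i x * cnj (f i y))"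
      using insert.IH[OF hr' pX'] by blast
    define f' where "f' i x = (if i = k then v0 x else if x = a then 0 else f i x)" for i x
    show ?thesis
    proof (intro exI ballI)
      fix x y assume x: "x \<in> insert a X" and y: "y \<in> insert a X"
      have "(\<Sum>i<Suc k. f' i x * cnj (f' i y)) = (\<Sum>i<k. f' i x * cnj (f' i y)) + v0 x * cnj (v0 y)"
        by (simp add: f'_def)
      also have "(\<Sum>i<k. f' i x * cnj (f' i y)) = r' x y"
      proof (cases "x = a \<or> y = a")
        case True
        then have "\<And>i. i < k \<Longrightarrow> f' i x * cnj (f' i y) = 0" by (auto simp: f'_def)
        then have "(\<Sum>i<k. f' i x * cnj (f' i y)) = 0" by (simp del: mult_eq_0_iff)
        moreover have "r' x y = 0" using True r'row r'col by blast
        ultimately show ?thesis by simp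
      next
        case False
        then have "\<And>i. i < k \<Longrightarrow> f' i x * cnj (f' i y) = f i x * cnj (f i y)" by (simp add: f'_def)
        then show ?thesis using f x y False by simp
      qed
      finally show "r x y = (\<Sum>i<Suc k. f' i x * cnj (f' i y))" unfolding r'_def by simp
    qed
  qed
qed

definition nrm2 :: "nat set \<Rightarrow> (nat set \<Rightarrow> complex) \<Rightarrow> real" where
  "nrm2 V g = (\<Sum>x\<in>Pow V. (cmod (g x))\<^sup>2)"

definition nrmz :: "nat set \<Rightarrow> (nat set \<Rightarrow> complex) \<Rightarrow> nat set \<Rightarrow> complex" where
  "nrmz V g x = (if x \<subseteq> V then g x / complex_of_real (sqrt (nrm2 V g)) else 0)"

lemma nrm2_nonneg: "nrm2 V g \<ge> 0" unfolding nrm2_def by (simp add: sum_nonneg)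

lemma unit_nrmz:
  assumes "finite V" "nrm2 V g > 0"
  shows "unit_vec V (nrmz V g)"
proof -
  have "(\<Sum>x\<in>Pow V. (cmod (nrmz V g x))\<^sup>2) = (\<Sum>x\<in>Pow V. (cmod (g x))\<^sup>2 / nrm2 V g)"
    using assms by (intro sum.cong refl) (auto simp: nrmz_def norm_divide power_divide)
  also have "\<dots> = nrm2 V g / nrm2 V g" by (simp only: nrm2_def sum_divide_distrib)
  finally show ?thesis using assms by (simp add: unit_vec_def is_vec_def nrmz_def)
qed

lemma nrm2_prod:
  assumes "finite U" "S \<subseteq> U" "\<And>x. x \<subseteq> U \<Longrightarrow> \<Phi> x = g (x \<inter> S) * h (x - S)"
  shows "nrm2 U \<Phi> = nrm2 S g * nrm2 (U - S) h"
proof -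
  have US: "U = S \<union> (U - S)" using assms by auto
  have fin: "finite S" "finite (U - S)" using assms finite_subset by auto
  have "nrm2 U \<Phi> = (\<Sum>a\<in>Pow S. \<Sum>b\<in>Pow (U - S). (cmod (\<Phi> (a \<union> b)))\<^sup>2)"
    unfolding nrm2_def by (subst US, rule sum_Pow_split) (use fin in auto)
  also have "\<dots> = (\<Sum>a\<in>Pow S. \<Sum>b\<in>Pow (U - S). (cmod (g a))\<^sup>2 * (cmod (h b))\<^sup>2)"
  proof (intro sum.cong refl)
    fix a b assume a: "a \<in> Pow S" and b: "b \<in> Pow (U - S)"
    then have "(a \<union> b) \<inter> S = a" "(a \<union> b) - S = b" "a \<union> b \<subseteq> U" using assms by auto
    then show "(cmod (\<Phi> (a \<union> b)))\<^sup>2 = (cmod (g a))\<^sup>2 * (cmod (h b))\<^sup>2"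
      using assms(3)[of "a \<union> b"] by (simp add: norm_mult power_mult_distrib)
  qed
  also have "\<dots> = nrm2 S g * nrm2 (U - S) h"
    by (simp add: nrm2_def sum_product)
  finally show ?thesis .
qed

lemma prodlemma:
  assumes U: "U = qubits n" and un: "unit_vec U \<Phi>" and S: "S \<subseteq> U"
    and fac: "\<And>x. x \<subseteq> U \<Longrightarrow> \<Phi> x = g (x \<inter> S) * h (x - S)"
  shows "product_wrt n S \<Phi>"
proof -
  have finU: "finite U" using U by simp
  have fin: "finite S" "finite (U - S)" using finU S finite_subset by auto
  have one: "nrm2 U \<Phi> = 1" using un unfolding unit_vec_def nrm2_def by simp
  have GH: "nrm2 S g * nrm2 (U - S) h = 1" using nrm2_prod[of U S \<Phi> g h] finU S fac one by simp
  have Gp: "nrm2 S g > 0" and Hp: "nrm2 (U - S) h > 0"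
    using GH nrm2_nonneg[of S g] nrm2_nonneg[of "U - S" h]
    by (metis less_eq_real_def mult_eq_0_iff zero_neq_one)+
  have "\<forall>x\<subseteq>U. \<Phi> x = nrmz S g (x \<inter> S) * nrmz (U - S) h (x - S)"
  proof (intro allI impI)
    fix x assume x: "x \<subseteq> U"
    have "sqrt (nrm2 S g) * sqrt (nrm2 (U - S) h) = 1" using GH by (simp add: real_sqrt_mult[symmetric])
    then have "complex_of_real (sqrt (nrm2 S g)) * complex_of_real (sqrt (nrm2 (U - S) h)) = 1"
      by (metis of_real_1 of_real_mult)
    then show "\<Phi> x = nrmz S g (x \<inter> S) * nrmz (U - S) h (x - S)"
      using x fac[OF x] by (auto simp: nrmz_def field_simps)
  qed
  then show ?thesis unfolding product_wrt_def U[symmetric]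
    using unit_nrmz[OF fin(1) Gp] unit_nrmz[OF fin(2) Hp] by blast
qed

definition tens :: "nat set \<Rightarrow> nat set \<Rightarrow> (nat set \<Rightarrow> nat set \<Rightarrow> complex) \<Rightarrow> (nat set \<Rightarrow> nat set \<Rightarrow> complex) \<Rightarrow> nat set \<Rightarrow> nat set \<Rightarrow> complex" where
  "tens V A r1 r2 x y = (if x \<subseteq> V \<and> y \<subseteq> V then r1 (x \<inter> A) (y \<inter> A) * r2 (x - A) (y - A) else 0)"

definition rk1 :: "nat set \<Rightarrow> (nat set \<Rightarrow> nat set \<Rightarrow> complex) \<Rightarrow> 'j set \<Rightarrow> ('j \<Rightarrow> nat set \<Rightarrow> complex) \<Rightarrow> bool" where
  "rk1 V r J f \<longleftrightarrow> finite J \<and> (\<forall>x\<in>Pow V. \<forall>y\<in>Pow V. r x y = (\<Sum>j\<in>J. f j x * cnj (f j y)))"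

lemma density_rk1:
  assumes "density n r"
  shows "\<exists>k f. rk1 (qubits n) r ({..<k} :: nat set) f"
  using cholesky[of "Pow (qubits n)" r] assms unfolding density_iff psd_psdX rk1_def by auto

lemma rk1_psd: "rk1 V r J f \<Longrightarrow> psd V r"
  unfolding rk1_def psd_psdX by (intro rank1_psdX) auto

lemma ptr_rk1:
  assumes fin: "finite V" and SV: "S \<subseteq> V" and r: "rk1 V r J f"
  shows "rk1 S (ptr V r S) (J \<times> Pow (V - S)) (\<lambda>p a. f (fst p) (a \<union> snd p))"
  unfolding rk1_def
proof (intro conjI ballI)
  show "finite (J \<times> Pow (V - S))" using r fin unfolding rk1_def by simp
  fix x y assume x: "x \<in> Pow S" and y: "y \<in> Pow S"
  have "ptr V r S x y = (\<Sum>z\<in>Pow (V - S). \<Sum>j\<in>J. f j (x \<union> z) * cnj (f j (y \<union> z)))"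
  proof -
    have "\<And>z. z \<in> Pow (V - S) \<Longrightarrow> r (x \<union> z) (y \<union> z) = (\<Sum>j\<in>J. f j (x \<union> z) * cnj (f j (y \<union> z)))"
    proof -
      fix z assume "z \<in> Pow (V - S)"
      then have "x \<union> z \<in> Pow V" "y \<union> z \<in> Pow V" using x y SV by auto
      then show "r (x \<union> z) (y \<union> z) = (\<Sum>j\<in>J. f j (x \<union> z) * cnj (f j (y \<union> z)))"
        using r unfolding rk1_def by blast
    qed
    then show ?thesis using x y unfolding ptr_def by (auto intro: sum.cong)
  qed
  also have "\<dots> = (\<Sum>p\<in>J \<times> Pow (V - S). f (fst p) (x \<union> snd p) * cnj (f (fst p) (y \<union> snd p)))"
    by (subst sum.swap) (simp add: sum.cartesian_product split_def)
  finally show "ptr V r S x y = (\<Sum>p\<in>J \<times> Pow (V - S). f (fst p) (x \<union> snd p) * cnj (f (fst p) (y \<union> snd p)))" .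
qed

lemma tens_rk1:
  assumes AV: "A \<subseteq> V" and r1: "rk1 A r1 J1 f1" and r2: "rk1 (V - A) r2 J2 f2"
  shows "rk1 V (tens V A r1 r2) (J1 \<times> J2) (\<lambda>p x. f1 (fst p) (x \<inter> A) * f2 (snd p) (x - A))"
  unfolding rk1_def
proof (intro conjI ballI)
  show "finite (J1 \<times> J2)" using r1 r2 unfolding rk1_def by simp
  fix x y assume x: "x \<in> Pow V" and y: "y \<in> Pow V"
  have "tens V A r1 r2 x y = (\<Sum>i\<in>J1. f1 i (x \<inter> A) * cnj (f1 i (y \<inter> A))) * (\<Sum>j\<in>J2. f2 j (x - A) * cnj (f2 j (y - A)))"
  proof -
    have "x \<inter> A \<in> Pow A" "y \<inter> A \<in> Pow A" "x - A \<in> Pow (V - A)" "y - A \<in> Pow (V - A)" using x y by auto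
    then show ?thesis using x y r1 r2 unfolding tens_def rk1_def by simp
  qed
  also have "\<dots> = (\<Sum>p\<in>J1 \<times> J2. f1 (fst p) (x \<inter> A) * f2 (snd p) (x - A) * cnj (f1 (fst p) (y \<inter> A) * f2 (snd p) (y - A)))"
    by (simp add: sum_product sum.cartesian_product split_def algebra_simps)
  finally show "tens V A r1 r2 x y = (\<Sum>p\<in>J1 \<times> J2. f1 (fst p) (x \<inter> A) * f2 (snd p) (x - A) * cnj (f1 (fst p) (y \<inter> A) * f2 (snd p) (y - A)))" .
qed

lemma trace_ptr:
  assumes "finite V" "S \<subseteq> V"
  shows "(\<Sum>x\<in>Pow S. ptr V r S x x) = (\<Sum>x\<in>Pow V. r x x)"
proof -
  have VS: "V = S \<union> (V - S)" using assms by auto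
  have fin: "finite S" "finite (V - S)" using assms finite_subset by auto
  have "(\<Sum>x\<in>Pow V. r x x) = (\<Sum>a\<in>Pow S. \<Sum>b\<in>Pow (V - S). r (a \<union> b) (a \<union> b))"
    by (subst VS, rule sum_Pow_split) (use fin in auto)
  then show ?thesis by (simp add: ptr_def)
qed

lemma herm_ptr:
  assumes "herm r" shows "herm (ptr V r S)"
  unfolding herm_def
proof (intro allI)
  fix x y
  have "\<And>z. r (y \<union> z) (x \<union> z) = cnj (r (x \<union> z) (y \<union> z))" using assms unfolding herm_def by blast
  then show "ptr V r S y x = cnj (ptr V r S x y)" unfolding ptr_def by auto
qed

lemma herm_tens: "herm r1 \<Longrightarrow> herm r2 \<Longrightarrow> herm (tens V A r1 r2)"
proof -
  assume h1: "herm r1" and h2: "herm r2"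
  show "herm (tens V A r1 r2)" unfolding herm_def
  proof (intro allI)
    fix x y
    have "r1 (y \<inter> A) (x \<inter> A) = cnj (r1 (x \<inter> A) (y \<inter> A))" using h1 unfolding herm_def by blast
    moreover have "r2 (y - A) (x - A) = cnj (r2 (x - A) (y - A))" using h2 unfolding herm_def by blast
    ultimately show "tens V A r1 r2 y x = cnj (tens V A r1 r2 x y)" unfolding tens_def by auto
  qed
qed

lemma trace_tens:
  assumes "finite V" "A \<subseteq> V"
  shows "(\<Sum>x\<in>Pow V. tens V A r1 r2 x x) = (\<Sum>a\<in>Pow A. r1 a a) * (\<Sum>b\<in>Pow (V - A). r2 b b)"
proof -
  have VS: "V = A \<union> (V - A)" using assms by auto
  have fin: "finite A" "finite (V - A)" using assms finite_subset by auto
  have "(\<Sum>x\<in>Pow V. tens V A r1 r2 x x) = (\<Sum>a\<in>Pow A. \<Sum>b\<in>Pow (V - A). tens V A r1 r2 (a \<union> b) (a \<union> b))"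
    by (subst VS, rule sum_Pow_split) (use fin in auto)
  also have "\<dots> = (\<Sum>a\<in>Pow A. \<Sum>b\<in>Pow (V - A). r1 a a * r2 b b)"
  proof (intro sum.cong refl)
    fix a b assume "a \<in> Pow A" "b \<in> Pow (V - A)"
    then have "(a \<union> b) \<inter> A = a" "(a \<union> b) - A = b" "a \<union> b \<subseteq> V" using assms by auto
    then show "tens V A r1 r2 (a \<union> b) (a \<union> b) = r1 a a * r2 b b" by (simp add: tens_def)
  qed
  also have "\<dots> = (\<Sum>a\<in>Pow A. r1 a a) * (\<Sum>b\<in>Pow (V - A). r2 b b)" by (simp add: sum_product)
  finally show ?thesis .
qed

lemma ptr_tens:
  assumes fin: "finite V" and AV: "A \<subseteq> V" and SV: "S \<subseteq> V" and x: "x \<subseteq> S" and y: "y \<subseteq> S"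
  shows "ptr V (tens V A r1 r2) S x y = ptr A r1 (S \<inter> A) (x \<inter> A) (y \<inter> A) * ptr (V - A) r2 (S - A) (x - A) (y - A)"
proof -
  have fin2: "finite (A - S)" "finite (V - A - S)" using fin finite_subset AV by auto
  have VS: "V - S = (A - S) \<union> (V - A - S)" using AV by auto
  have "ptr V (tens V A r1 r2) S x y = (\<Sum>z\<in>Pow ((A - S) \<union> (V - A - S)). tens V A r1 r2 (x \<union> z) (y \<union> z))"
    using x y by (simp add: ptr_def VS)
  also have "\<dots> = (\<Sum>a\<in>Pow (A - S). \<Sum>b\<in>Pow (V - A - S). tens V A r1 r2 (x \<union> (a \<union> b)) (y \<union> (a \<union> b)))"
    by (rule sum_Pow_split) (use fin2 in auto)
  also have "\<dots> = (\<Sum>a\<in>Pow (A - S). \<Sum>b\<in>Pow (V - A - S). r1 (x \<inter> A \<union> a) (y \<inter> A \<union> a) * r2 ((x - A) \<union> b) ((y - A) \<union> b))"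
  proof (intro sum.cong refl)
    fix a b assume "a \<in> Pow (A - S)" "b \<in> Pow (V - A - S)"
    then have "(x \<union> (a \<union> b)) \<inter> A = x \<inter> A \<union> a" "(y \<union> (a \<union> b)) \<inter> A = y \<inter> A \<union> a"
      "(x \<union> (a \<union> b)) - A = (x - A) \<union> b" "(y \<union> (a \<union> b)) - A = (y - A) \<union> b"
      "x \<union> (a \<union> b) \<subseteq> V" "y \<union> (a \<union> b) \<subseteq> V" using AV SV x y by auto
    then show "tens V A r1 r2 (x \<union> (a \<union> b)) (y \<union> (a \<union> b)) = r1 (x \<inter> A \<union> a) (y \<inter> A \<union> a) * r2 ((x - A) \<union> b) ((y - A) \<union> b)"
      by (simp add: tens_def)
  qed
  also have "\<dots> = (\<Sum>a\<in>Pow (A - S). r1 (x \<inter> A \<union> a) (y \<inter> A \<union> a)) * (\<Sum>b\<in>Pow (V - A - S). r2 ((x - A) \<union> b) ((y - A) \<union> b))"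
    by (simp add: sum_product)
  also have "\<dots> = ptr A r1 (S \<inter> A) (x \<inter> A) (y \<inter> A) * ptr (V - A) r2 (S - A) (x - A) (y - A)"
  proof -
    have e1: "A - S \<inter> A = A - S" by auto
    have e2: "V - A - (S - A) = V - A - S" by auto
    show ?thesis using x y unfolding ptr_def e1 e2 by auto
  qed
  finally show ?thesis .
qed

lemma nrm2_zero: "finite V \<Longrightarrow> nrm2 V g = 0 \<Longrightarrow> x \<subseteq> V \<Longrightarrow> g x = 0"
  unfolding nrm2_def using sum_nonneg_eq_0_iff[of "Pow V" "\<lambda>x. (cmod (g x))\<^sup>2"] by auto

lemma term_eq:
  assumes fin: "finite V" and x: "x \<subseteq> V" and y: "y \<subseteq> V"
  shows "complex_of_real (nrm2 V g) * proj (if nrm2 V g > 0 then nrmz V g else \<psi>0) x y = g x * cnj (g y)"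
proof (cases "nrm2 V g > 0")
  case True
  define s where "s = sqrt (nrm2 V g)"
  have "s * s = nrm2 V g" using True unfolding s_def by simp
  then have ss: "complex_of_real (nrm2 V g) = complex_of_real s * complex_of_real s"
    by (metis of_real_mult)
  have s0: "complex_of_real s \<noteq> 0" using True unfolding s_def by simp
  have pr: "proj (nrmz V g) x y = g x * cnj (g y) / (complex_of_real s * complex_of_real s)"
    using x y unfolding proj_def nrmz_def s_def[symmetric] by simp
  show ?thesis using True s0 unfolding ss by (simp add: pr)
next
  case False
  then have "nrm2 V g = 0" using nrm2_nonneg[of V g] by simp
  then show ?thesis using nrm2_zero[OF fin] x y by simp
qed

lemma rk1_diag: "rk1 V r J f \<Longrightarrow> x \<in> Pow V \<Longrightarrow> r x x = complex_of_real (\<Sum>j\<in>J. (cmod (f j x))\<^sup>2)"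
  unfolding rk1_def by (simp add: complex_norm_square del: of_real_power)

lemma rank1_convex:
  assumes fin: "finite V" and r: "rk1 V r J f" and op: "is_op V r" and tr: "(\<Sum>x\<in>Pow V. r x x) = 1"
    and P: "\<And>j. j \<in> J \<Longrightarrow> nrm2 V (f j) > 0 \<Longrightarrow> P (nrmz V (f j))"
    and P0: "P \<psi>0" and v0: "is_vec V \<psi>0"
  shows "convex_pure P r"
proof -
  have finJ: "finite J" using r unfolding rk1_def by simp
  obtain h where h: "bij_betw h {0..<card J} J" using ex_bij_betw_nat_finite[OF finJ] by blast
  define k where "k = card J"
  define p where "p i = nrm2 V (f (h i))" for i
  define psi where "psi i = (if nrm2 V (f (h i)) > 0 then nrmz V (f (h i)) else \<psi>0)" for i
  have hJ: "\<And>i. i < k \<Longrightarrow> h i \<in> J" using h unfolding k_def bij_betw_def by auto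
  have c1: "\<forall>i<k. p i \<ge> 0 \<and> P (psi i)"
    using nrm2_nonneg P P0 hJ unfolding p_def psi_def by auto
  have sumre: "\<And>g. (\<Sum>i<k. g (h i)) = (\<Sum>j\<in>J. g j)"
    using sum.reindex_bij_betw[OF h] unfolding k_def by (simp add: lessThan_atLeast0)
  have c2: "(\<Sum>i<k. p i) = 1"
  proof -
    have "(\<Sum>i<k. p i) = (\<Sum>j\<in>J. nrm2 V (f j))" unfolding p_def by (rule sumre)
    also have "\<dots> = (\<Sum>x\<in>Pow V. \<Sum>j\<in>J. (cmod (f j x))\<^sup>2)" unfolding nrm2_def by (rule sum.swap)
    also have "complex_of_real \<dots> = (\<Sum>x\<in>Pow V. r x x)"
      using rk1_diag[OF r] by simp
    finally show ?thesis using tr by (metis of_real_eq_1_iff)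
  qed
  have c3: "r = (\<lambda>x y. \<Sum>i<k. complex_of_real (p i) * proj (psi i) x y)"
  proof (intro ext)
    fix x y
    show "r x y = (\<Sum>i<k. complex_of_real (p i) * proj (psi i) x y)"
    proof (cases "x \<subseteq> V \<and> y \<subseteq> V")
      case True
      have "(\<Sum>i<k. complex_of_real (p i) * proj (psi i) x y) = (\<Sum>i<k. f (h i) x * cnj (f (h i) y))"
        unfolding p_def psi_def using term_eq[OF fin] True by simp
      also have "\<dots> = (\<Sum>j\<in>J. f j x * cnj (f j y))" by (rule sumre)
      also have "\<dots> = r x y" using r True unfolding rk1_def by simp
      finally show ?thesis by simp
    next
      case False
      have "\<And>i. psi i x * cnj (psi i y) = 0"
      proof -
        fix i
        have "is_vec V (psi i)" unfolding psi_def using v0 by (auto simp: is_vec_def nrmz_def)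
        then show "psi i x * cnj (psi i y) = 0" using False unfolding is_vec_def by auto
      qed
      then have "(\<Sum>i<k. complex_of_real (p i) * proj (psi i) x y) = 0" by (simp add: proj_def del: mult_eq_0_iff)
      moreover have "r x y = 0" using op False unfolding is_op_def by blast
      ultimately show ?thesis by simp
    qed
  qed
  show ?thesis unfolding convex_pure_def using c1 c2 c3 by blast
qed

lemma trace_one_ptr:
  assumes "density n r" "S \<subseteq> qubits n"
  shows "(\<Sum>x\<in>Pow S. ptr (qubits n) r S x x) = 1"
  using trace_ptr[of "qubits n" S r] assms unfolding density_iff by simp

lemma density_tens:
  assumes d: "density n r" and A: "A \<subseteq> qubits n"
  shows "density n (tens (qubits n) A (ptr (qubits n) r A) (ptr (qubits n) r (qubits n - A)))"
proof -
  let ?U = "qubits n"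
  let ?s = "tens ?U A (ptr ?U r A) (ptr ?U r (?U - A))"
  have h: "herm r" using d unfolding density_iff by simp
  obtain k and f :: "nat \<Rightarrow> nat set \<Rightarrow> complex" where f: "rk1 ?U r ({..<k}) f" using density_rk1[OF d] by blast
  have r1: "rk1 A (ptr ?U r A) ({..<k} \<times> Pow (?U - A)) (\<lambda>p a. f (fst p) (a \<union> snd p))"
    by (rule ptr_rk1) (use f A in auto)
  have r2: "rk1 (?U - A) (ptr ?U r (?U - A)) ({..<k} \<times> Pow (?U - (?U - A))) (\<lambda>p a. f (fst p) (a \<union> snd p))"
    by (rule ptr_rk1) (use f A in auto)
  have psd: "psd ?U ?s" by (rule rk1_psd, rule tens_rk1[OF A r1 r2])
  have op: "is_op ?U ?s" unfolding is_op_def tens_def by auto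
  have tr: "(\<Sum>x\<in>Pow ?U. ?s x x) = 1"
    using trace_tens[of ?U A] trace_one_ptr[OF d A] trace_one_ptr[OF d, of "?U - A"] A by simp
  show ?thesis unfolding density_iff using psd op tr herm_tens herm_ptr h by blast
qed

lemma compat_tens:
  assumes d: "density n r" and A: "A \<subseteq> qubits n" and S: "S \<subseteq> qubits n"
    and SA: "S \<subseteq> A \<or> S \<inter> A = {}"
  shows "ptr (qubits n) (tens (qubits n) A (ptr (qubits n) r A) (ptr (qubits n) r (qubits n - A))) S = ptr (qubits n) r S"
proof (intro ext)
  fix x y
  let ?U = "qubits n"
  show "ptr ?U (tens ?U A (ptr ?U r A) (ptr ?U r (?U - A))) S x y = ptr ?U r S x y"
  proof (cases "x \<subseteq> S \<and> y \<subseteq> S")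
    case True
    note pt = ptr_tens[of ?U A S x y "ptr ?U r A" "ptr ?U r (?U - A)"]
    show ?thesis
    proof (cases "S \<subseteq> A")
      case True': True
      have e: "S \<inter> A = S" "x \<inter> A = x" "y \<inter> A = y" "S - A = {}" "x - A = {}" "y - A = {}"
        using True True' by auto
      have t2: "ptr (?U - A) (ptr ?U r (?U - A)) {} {} {} = 1"
        using trace_one_ptr[OF d, of "?U - A"] by (simp add: ptr_def)
      have t1: "ptr A (ptr ?U r A) S x y = ptr ?U r S x y"
        using ptr_ptr[of ?U S A r x y] True' A by simp
      show ?thesis using pt True A S unfolding e t2 t1 by simp
    next
      case False
      then have SA': "S \<inter> A = {}" using SA by blast
      have e: "S \<inter> A = {}" "x \<inter> A = {}" "y \<inter> A = {}" "S - A = S" "x - A = x" "y - A = y"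
        using True SA' by auto
      have t1: "ptr A (ptr ?U r A) {} {} {} = 1"
        using trace_one_ptr[OF d A] by (simp add: ptr_def)
      have t2: "ptr (?U - A) (ptr ?U r (?U - A)) S x y = ptr ?U r S x y"
      proof -
        have "S \<subseteq> ?U - A" using SA' S by blast
        then show ?thesis using ptr_ptr[of ?U S "?U - A" r x y] by simp
      qed
      show ?thesis using pt True A S unfolding e t2 t1 by simp
    qed
  next
    case False then show ?thesis by (simp add: ptr_out)
  qed
qed

lemma ev_empty_prod:
  assumes "x \<subseteq> U"
  shows "ev {} x = ev {} (x \<inter> S) * ev {} (x - S)"
  by (auto simp: ev_def)

lemma unit_ev_empty: "finite U \<Longrightarrow> unit_vec U (ev {})"
proof -
  assume "finite U"
  moreover have "\<And>x. (cmod (ev {} x))\<^sup>2 = (if x = {} then 1 else 0)" by (simp add: ev_def)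
  ultimately show ?thesis by (simp add: unit_vec_def is_vec_def ev_def)
qed

lemma biseparable_tens:
  assumes d: "density n r" and A: "A \<noteq> {}" "A \<subseteq> qubits n" "A \<noteq> qubits n"
  shows "biseparable n (tens (qubits n) A (ptr (qubits n) r A) (ptr (qubits n) r (qubits n - A)))"
proof -
  let ?U = "qubits n"
  let ?s = "tens ?U A (ptr ?U r A) (ptr ?U r (?U - A))"
  have ds: "density n ?s" using density_tens[OF d A(2)] .
  obtain k and f :: "nat \<Rightarrow> nat set \<Rightarrow> complex" where f: "rk1 ?U r ({..<k}) f" using density_rk1[OF d] by blast
  have r1: "rk1 A (ptr ?U r A) ({..<k} \<times> Pow (?U - A)) (\<lambda>p a. f (fst p) (a \<union> snd p))"
    by (rule ptr_rk1) (use f A in auto)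
  have r2: "rk1 (?U - A) (ptr ?U r (?U - A)) ({..<k} \<times> Pow (?U - (?U - A))) (\<lambda>p a. f (fst p) (a \<union> snd p))"
    by (rule ptr_rk1) (use f A in auto)
  note rs = tens_rk1[OF A(2) r1 r2]
  have pb: "proper_bipart n A" unfolding proper_bipart_def using A by auto
  show ?thesis unfolding biseparable_def
  proof (rule rank1_convex[OF _ rs])
    show "finite ?U" by simp
    show "is_op ?U ?s" "(\<Sum>x\<in>Pow ?U. ?s x x) = 1" using ds unfolding density_iff by auto
    show "pure_bisep n (ev {})" unfolding pure_bisep_def
      using unit_ev_empty[of ?U] prodlemma[OF refl unit_ev_empty[of ?U] A(2) ev_empty_prod] pb by auto
    show "is_vec ?U (ev {})" by (auto simp: is_vec_def ev_def)
  next
    fix j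
    let ?g = "\<lambda>x. (\<lambda>a. f (fst (fst j)) (a \<union> snd (fst j))) (x \<inter> A) * (\<lambda>a. f (fst (snd j)) (a \<union> snd (snd j))) (x - A)"
    assume "nrm2 ?U ?g > 0"
    then have un: "unit_vec ?U (nrmz ?U ?g)" using unit_nrmz by simp
    have fac: "\<And>x. x \<subseteq> ?U \<Longrightarrow> nrmz ?U ?g x = (\<lambda>a. f (fst (fst j)) (a \<union> snd (fst j)) / complex_of_real (sqrt (nrm2 ?U ?g))) (x \<inter> A) * (\<lambda>a. f (fst (snd j)) (a \<union> snd (snd j))) (x - A)"
      by (simp add: nrmz_def)
    show "pure_bisep n (nrmz ?U ?g)" unfolding pure_bisep_def
      using un prodlemma[OF refl un A(2) fac] pb by blast
  qed
qed

definition factorable :: "nat set \<Rightarrow> (nat set \<Rightarrow> complex) \<Rightarrow> bool" where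
  "factorable U \<Psi> \<longleftrightarrow> (\<forall>S\<subseteq>U. \<exists>g h. \<forall>x\<subseteq>U. \<Psi> x = g (x \<inter> S) * h (x - S))"

lemma fullsep_of_factorable:
  assumes "unit_vec (qubits n) \<Phi>" "factorable (qubits n) \<Phi>"
  shows "pure_fullsep n \<Phi>"
  unfolding pure_fullsep_def
proof (intro conjI allI impI)
  show "unit_vec (qubits n) \<Phi>" using assms by simp
  fix S assume "proper_bipart n S"
  then have S: "S \<subseteq> qubits n" unfolding proper_bipart_def by auto
  then obtain g h where "\<forall>x\<subseteq>qubits n. \<Phi> x = g (x \<inter> S) * h (x - S)"
    using assms(2) unfolding factorable_def by blast
  then show "product_wrt n S \<Phi>" using prodlemma[OF refl assms(1) S, of g h] by blast
qed

lemma factorable_scale: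
  assumes fa: "factorable U \<Psi>" shows "factorable U (\<lambda>x. c * \<Psi> x)"
  unfolding factorable_def
proof (intro allI impI)
  fix S assume "S \<subseteq> U"
  then obtain g h where gh: "\<forall>x\<subseteq>U. \<Psi> x = g (x \<inter> S) * h (x - S)" using fa unfolding factorable_def by presburger
  have "\<forall>x\<subseteq>U. c * \<Psi> x = (\<lambda>a. c * g a) (x \<inter> S) * h (x - S)"
  proof (intro allI impI)
    fix x assume "x \<subseteq> U" then show "c * \<Psi> x = (\<lambda>a. c * g a) (x \<inter> S) * h (x - S)" using gh by simp
  qed
  then show "\<exists>g h. \<forall>x\<subseteq>U. c * \<Psi> x = g (x \<inter> S) * h (x - S)"
    by (intro exI[of _ "\<lambda>a. c * g a"] exI[of _ h]) simp
qed

lemma pure_from_form: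
  assumes d: "density n r" and v: "is_vec (qubits n) \<Psi>" and fa: "factorable (qubits n) \<Psi>"
    and c: "c \<ge> 0"
    and form: "\<And>x y. x \<subseteq> qubits n \<Longrightarrow> y \<subseteq> qubits n \<Longrightarrow> r x y = complex_of_real c * \<Psi> x * cnj (\<Psi> y)"
  shows "\<exists>\<Phi>. pure_fullsep n \<Phi> \<and> r = proj \<Phi>"
proof -
  let ?U = "qubits n"
  define \<Phi> where "\<Phi> x = complex_of_real (sqrt c) * \<Psi> x" for x
  have sc: "complex_of_real (sqrt c) * cnj (complex_of_real (sqrt c)) = complex_of_real c"
  proof -
    have "sqrt c * sqrt c = c" using c by simp
    then show ?thesis by (metis complex_cnj_complex_of_real of_real_mult)
  qed
  have pr: "\<And>x y. x \<subseteq> ?U \<Longrightarrow> y \<subseteq> ?U \<Longrightarrow> r x y = proj \<Phi> x y"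
    unfolding proj_def \<Phi>_def using form sc by (simp add: algebra_simps)
  have req: "r = proj \<Phi>"
  proof (intro ext)
    fix x y show "r x y = proj \<Phi> x y"
    proof (cases "x \<subseteq> ?U \<and> y \<subseteq> ?U")
      case True then show ?thesis using pr by blast
    next
      case False
      then have "r x y = 0" using d unfolding density_iff is_op_def by blast
      moreover have "proj \<Phi> x y = 0" using False v unfolding proj_def \<Phi>_def is_vec_def by auto
      ultimately show ?thesis by simp
    qed
  qed
  have "(\<Sum>x\<in>Pow ?U. r x x) = 1" using d unfolding density_iff by simp
  then have "(\<Sum>x\<in>Pow ?U. proj \<Phi> x x) = 1" using req by simp
  moreover have "\<And>x. proj \<Phi> x x = complex_of_real ((cmod (\<Phi> x))\<^sup>2)"
    unfolding proj_def by (metis complex_norm_square)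
  ultimately have "complex_of_real (\<Sum>x\<in>Pow ?U. (cmod (\<Phi> x))\<^sup>2) = 1" by simp
  then have "(\<Sum>x\<in>Pow ?U. (cmod (\<Phi> x))\<^sup>2) = 1" by (metis of_real_eq_1_iff)
  moreover have "is_vec ?U \<Phi>" using v unfolding is_vec_def \<Phi>_def by simp
  ultimately have un: "unit_vec ?U \<Phi>" unfolding unit_vec_def by simp
  have "factorable ?U \<Phi>" unfolding \<Phi>_def by (rule factorable_scale[OF fa])
  then show ?thesis using fullsep_of_factorable[OF un] req by blast
qed

lemma card_split: "finite x \<Longrightarrow> card x = card (x \<inter> S) + card (x - S)"
proof -
  assume f: "finite x"
  have "x = (x \<inter> S) \<union> (x - S)" by blast
  moreover have "card ((x \<inter> S) \<union> (x - S)) = card (x \<inter> S) + card (x - S)"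
    by (rule card_Un_disjoint) (use f in auto)
  ultimately show ?thesis by simp
qed

lemma recur_pow:
  fixes F :: "nat set \<Rightarrow> complex"
  assumes "finite U" and rec: "\<And>i w. i \<in> U \<Longrightarrow> w \<subseteq> U - {i} \<Longrightarrow> F (insert i w) = lam * F w"
  shows "x \<subseteq> U \<Longrightarrow> F x = lam ^ card x * F {}"
proof -
  assume xU: "x \<subseteq> U"
  have "finite x" using xU assms(1) finite_subset by blast
  then show ?thesis using xU
  proof (induction x rule: finite_induct)
    case empty then show ?case by simp
  next
    case (insert i w)
    have "w \<subseteq> U - {i}" "i \<in> U" using insert by auto
    then have "F (insert i w) = lam * F w" using rec by blast
    then show ?case using insert by simp
  qed
qed

lemma factorable_pow: "finite U \<Longrightarrow> factorable U (\<lambda>x. if x \<subseteq> U then lam ^ card x else 0)"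
  unfolding factorable_def
proof (intro allI impI)
  fix S assume "finite U" "S \<subseteq> U"
  have "\<forall>x\<subseteq>U. (if x \<subseteq> U then lam ^ card x else 0) = lam ^ card (x \<inter> S) * lam ^ card (x - S)"
  proof (intro allI impI)
    fix x assume "x \<subseteq> U"
    then have "finite x" using \<open>finite U\<close> finite_subset by blast
    then show "(if x \<subseteq> U then lam ^ card x else 0) = lam ^ card (x \<inter> S) * lam ^ card (x - S)"
      using \<open>x \<subseteq> U\<close> card_split[of x S] by (simp add: power_add)
  qed
  then show "\<exists>g h. \<forall>x\<subseteq>U. (if x \<subseteq> U then lam ^ card x else 0) = g (x \<inter> S) * h (x - S)"
    by (intro exI[of _ "\<lambda>a. lam ^ card a"] exI[of _ "\<lambda>a. lam ^ card a"])
qed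

lemma factorable_evU: "factorable U (ev U)"
  unfolding factorable_def
proof (intro allI impI)
  fix S assume S: "S \<subseteq> U"
  have "\<forall>x\<subseteq>U. ev U x = ev S (x \<inter> S) * ev (U - S) (x - S)"
  proof (intro allI impI)
    fix x assume x: "x \<subseteq> U"
    have "x = U \<longleftrightarrow> x \<inter> S = S \<and> x - S = U - S" using x S by blast
    then show "ev U x = ev S (x \<inter> S) * ev (U - S) (x - S)" unfolding ev_def by simp
  qed
  then show "\<exists>g h. \<forall>x\<subseteq>U. ev U x = g (x \<inter> S) * h (x - S)"
    by (intro exI[of _ "ev S"] exI[of _ "ev (U - S)"])
qed

lemma sum_two:
  assumes "finite X" "a \<in> X" "b \<in> X" "a \<noteq> b" "\<And>x. x \<in> X \<Longrightarrow> x \<noteq> a \<Longrightarrow> x \<noteq> b \<Longrightarrow> h x = 0"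
  shows "sum h X = h a + h b"
proof -
  have "sum h X = sum h {a, b}"
    by (rule sum.mono_neutral_right) (use assms in auto)
  then show ?thesis using assms(4) by simp
qed

lemma qf_two:
  assumes fin: "finite V" and a: "a \<subseteq> V" and b: "b \<subseteq> V" and ab: "a \<noteq> b"
  shows "qf V r (\<lambda>x. c0 * ev a x + c1 * ev b x) =
    cnj c0 * c0 * r a a + cnj c0 * c1 * r a b + cnj c1 * c0 * r b a + cnj c1 * c1 * r b b"
proof -
  define g where "g x = c0 * ev a x + c1 * ev b x" for x
  have ga: "g a = c0" and gb: "g b = c1" using ab unfolding g_def ev_def by auto
  have g0: "\<And>x. x \<noteq> a \<Longrightarrow> x \<noteq> b \<Longrightarrow> g x = 0" unfolding g_def ev_def by auto
  have inner: "\<And>x. (\<Sum>y\<in>Pow V. cnj (g x) * r x y * g y) = cnj (g x) * r x a * c0 + cnj (g x) * r x b * c1"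
  proof -
    fix x
    have "(\<Sum>y\<in>Pow V. cnj (g x) * r x y * g y) = cnj (g x) * r x a * g a + cnj (g x) * r x b * g b"
      by (rule sum_two) (use fin a b ab g0 in auto)
    then show "(\<Sum>y\<in>Pow V. cnj (g x) * r x y * g y) = cnj (g x) * r x a * c0 + cnj (g x) * r x b * c1"
      using ga gb by simp
  qed
  have "qf V r g = (\<Sum>x\<in>Pow V. cnj (g x) * r x a * c0 + cnj (g x) * r x b * c1)"
    unfolding qf_def inner by simp
  also have "\<dots> = (cnj (g a) * r a a * c0 + cnj (g a) * r a b * c1) + (cnj (g b) * r b a * c0 + cnj (g b) * r b b * c1)"
    by (rule sum_two) (use fin a b ab g0 in auto)
  also have "\<dots> = (cnj c0 * r a a * c0 + cnj c0 * r a b * c1) + (cnj c1 * r b a * c0 + cnj c1 * r b b * c1)"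
    using ga gb by simp
  finally show ?thesis unfolding g_def[symmetric] by (simp add: algebra_simps)
qed

lemma swap_single: "swap_lbl a i {a} = {i}"
  by (simp add: swap_lbl_tau tau_def)

lemma swap_empty: "swap_lbl a i {} = {}"
  by (simp add: swap_lbl_tau)

lemma marg_same:
  assumes U: "finite U" and a: "a \<in> U" and i: "i \<in> U"
    and fs: "\<And>x y. r (swap_lbl a i x) (swap_lbl a i y) = r x y"
  shows "ptr U r {i} {} {} = ptr U r {a} {} {}" "ptr U r {i} {i} {} = ptr U r {a} {a} {}"
    "ptr U r {i} {} {i} = ptr U r {a} {} {a}" "ptr U r {i} {i} {i} = ptr U r {a} {a} {a}"
  using ptr_swap[of a U i r "{a}", OF a i fs] unfolding swap_single swap_empty
  by (metis swap_empty swap_single)+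

lemma sum_norm_zero:
  fixes s :: "nat \<Rightarrow> complex"
  assumes "(\<Sum>j<k. cnj (s j) * s j) = 0" "j < k"
  shows "s j = 0"
proof -
  have "(\<Sum>j<k. cnj (s j) * s j) = complex_of_real (\<Sum>j<k. (cmod (s j))\<^sup>2)"
    by (simp only: cnj_mult_self of_real_sum)
  then have "complex_of_real (\<Sum>j<k. (cmod (s j))\<^sup>2) = 0" using assms(1) by metis
  then have "(\<Sum>j<k. (cmod (s j))\<^sup>2) = 0" by (simp only: of_real_eq_0_iff)
  then have "(cmod (s j))\<^sup>2 = 0" using sum_nonneg_eq_0_iff[of "{..<k}" "\<lambda>j. (cmod (s j))\<^sup>2"] assms(2) by simp
  then show ?thesis by simp
qed

lemma kernel_step:
  fixes k :: nat and f :: "nat \<Rightarrow> nat set \<Rightarrow> complex"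
  assumes d: "density n r" and f: "rk1 (qubits n) r {..<k} f"
    and i: "i \<in> qubits n"
    and E: "cnj c0 * c0 * ptr (qubits n) r {i} {} {} + cnj c0 * c1 * ptr (qubits n) r {i} {} {i}
            + cnj c1 * c0 * ptr (qubits n) r {i} {i} {} + cnj c1 * c1 * ptr (qubits n) r {i} {i} {i} = 0"
    and w: "w \<subseteq> qubits n - {i}" and j: "j < k"
  shows "cnj (f j w) * c0 + cnj (f j (insert i w)) * c1 = 0"
proof -
  let ?U = "qubits n"
  define g where "g w = (\<lambda>x. c0 * ev w x + c1 * ev (insert i w) x)" for w
  define Q where "Q w = qf ?U r (g w)" for w
  have iw: "\<And>w. w \<subseteq> ?U - {i} \<Longrightarrow> w \<noteq> insert i w \<and> w \<subseteq> ?U \<and> insert i w \<subseteq> ?U" using i by auto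
  have Qe: "\<And>w. w \<subseteq> ?U - {i} \<Longrightarrow> Q w = cnj c0 * c0 * r w w + cnj c0 * c1 * r w (insert i w)
      + cnj c1 * c0 * r (insert i w) w + cnj c1 * c1 * r (insert i w) (insert i w)"
    unfolding Q_def g_def using qf_two iw by simp
  have pt: "\<And>x y. x \<subseteq> {i} \<Longrightarrow> y \<subseteq> {i} \<Longrightarrow> ptr ?U r {i} x y = (\<Sum>w\<in>Pow (?U - {i}). r (x \<union> w) (y \<union> w))"
    by (simp add: ptr_def)
  have sumQ: "(\<Sum>w\<in>Pow (?U - {i}). Q w) = 0"
  proof -
    have "(\<Sum>w\<in>Pow (?U - {i}). Q w) = (\<Sum>w\<in>Pow (?U - {i}). cnj c0 * c0 * r ({} \<union> w) ({} \<union> w) + cnj c0 * c1 * r ({} \<union> w) ({i} \<union> w)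
      + cnj c1 * c0 * r ({i} \<union> w) ({} \<union> w) + cnj c1 * c1 * r ({i} \<union> w) ({i} \<union> w))"
      using Qe by (intro sum.cong refl) auto
    also have "\<dots> = cnj c0 * c0 * ptr ?U r {i} {} {} + cnj c0 * c1 * ptr ?U r {i} {} {i}
            + cnj c1 * c0 * ptr ?U r {i} {i} {} + cnj c1 * c1 * ptr ?U r {i} {i} {i}"
      unfolding pt[OF order_refl order_refl] pt[OF empty_subsetI empty_subsetI] pt[OF empty_subsetI order_refl] pt[OF order_refl empty_subsetI]
      by (simp add: sum.distrib sum_distrib_left)
    finally show ?thesis using E by simp
  qed
  have ps: "psd ?U r" using d unfolding density_iff by simp
  have Qnn: "\<And>w. Re (Q w) \<ge> 0" "\<And>w. Im (Q w) = 0" using ps unfolding Q_def psd_def by auto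
  have "(\<Sum>w\<in>Pow (?U - {i}). Re (Q w)) = 0" using sumQ by (metis Re_sum zero_complex.sel(1))
  then have "Re (Q w) = 0" using sum_nonneg_eq_0_iff[of "Pow (?U - {i})" "\<lambda>w. Re (Q w)"] Qnn w by simp
  then have Q0: "Q w = 0" using Qnn(2)[of w] by (simp add: complex_eq_iff)
  have rk: "\<And>x y. x \<in> Pow ?U \<Longrightarrow> y \<in> Pow ?U \<Longrightarrow> r x y = (\<Sum>j\<in>{..<k}. f j x * cnj (f j y))"
    using f unfolding rk1_def by blast
  have "Q w = (\<Sum>j<k. cnj (\<Sum>y\<in>Pow ?U. cnj (f j y) * g w y) * (\<Sum>y\<in>Pow ?U. cnj (f j y) * g w y))"
    unfolding Q_def qf_qfX by (rule qfX_rank1[OF rk])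
  then have s0: "(\<Sum>y\<in>Pow ?U. cnj (f j y) * g w y) = 0"
    using sum_norm_zero[of "\<lambda>j. \<Sum>y\<in>Pow ?U. cnj (f j y) * g w y" k j] Q0 j by simp
  have "(\<Sum>y\<in>Pow ?U. cnj (f j y) * g w y) = cnj (f j w) * g w w + cnj (f j (insert i w)) * g w (insert i w)"
  proof (rule sum_two)
    show "finite (Pow ?U)" by simp
    show "w \<in> Pow ?U" "insert i w \<in> Pow ?U" "w \<noteq> insert i w" using iw[OF w] by auto
    fix x assume "x \<noteq> w" "x \<noteq> insert i w"
    then show "cnj (f j x) * g w x = 0" unfolding g_def ev_def by simp
  qed
  moreover have "g w w = c0" "g w (insert i w) = c1" using iw[OF w] unfolding g_def ev_def by auto
  ultimately show ?thesis using s0 by simp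
qed

lemma sym_tensor_fullsep:
  assumes d: "density n r" and inv: "\<forall>i\<in>qubits n. \<forall>j\<in>qubits n. invar r i j"
    and A: "A \<noteq> {}" "A \<subseteq> qubits n" "A \<noteq> qubits n"
    and eq: "r = tens (qubits n) A (ptr (qubits n) r A) (ptr (qubits n) r (qubits n - A))"
  shows "\<exists>\<Phi>. pure_fullsep n \<Phi> \<and> r = proj \<Phi>"
proof -
  let ?U = "qubits n"
  have finU: "finite ?U" by simp
  have h: "herm r" using d unfolding density_iff by simp
  have fs: "\<And>i j x y. i \<in> ?U \<Longrightarrow> j \<in> ?U \<Longrightarrow> r (swap_lbl i j x) (swap_lbl i j y) = r x y"
    using inv invar_both[OF h] by blast
  obtain a where a: "a \<in> A" using A by blast
  obtain b where b: "b \<in> ?U" "b \<notin> A" using A by blast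
  have aU: "a \<in> ?U" using a A by blast
  have ab: "a \<noteq> b" using a b by blast
  define \<tau> where "\<tau> = ptr ?U r {a}"
  define \<alpha> where "\<alpha> = \<tau> {} {}"
  define \<beta> where "\<beta> = \<tau> {a} {}"
  define \<gamma> where "\<gamma> = \<tau> {a} {a}"
  have h\<tau>: "herm \<tau>" unfolding \<tau>_def by (rule herm_ptr[OF h])
  have E1: "\<tau> {} {a} = cnj \<beta>" unfolding \<beta>_def using h\<tau> unfolding herm_def by blast
  have E2: "cnj \<alpha> = \<alpha>" unfolding \<alpha>_def using herm_diag_real[OF h\<tau>] by blast
  have E3: "\<And>i. i \<in> ?U \<Longrightarrow> ptr ?U r {i} {} {} = \<alpha> \<and> ptr ?U r {i} {} {i} = cnj \<beta>
      \<and> ptr ?U r {i} {i} {} = \<beta> \<and> ptr ?U r {i} {i} {i} = \<gamma>"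
  proof -
    fix i assume i: "i \<in> ?U"
    have "\<And>x y. r (swap_lbl a i x) (swap_lbl a i y) = r x y" using fs aU i by blast
    note m = marg_same[of ?U a i r, OF finU aU i this]
    show "ptr ?U r {i} {} {} = \<alpha> \<and> ptr ?U r {i} {} {i} = cnj \<beta> \<and> ptr ?U r {i} {i} {} = \<beta> \<and> ptr ?U r {i} {i} {i} = \<gamma>"
      using m E1 unfolding \<alpha>_def \<beta>_def \<gamma>_def \<tau>_def by simp
  qed
  define s where "s = tens ?U A (ptr ?U r A) (ptr ?U r (?U - A))"
  have rs: "r = s" using eq unfolding s_def .
  have abU: "{a, b} \<subseteq> ?U" using aU b by blast
  have pabA: "{a, b} \<inter> A = {a}" "{a, b} - A = {b}" using a b by auto
  have pt: "\<And>x y. x \<subseteq> {a, b} \<Longrightarrow> y \<subseteq> {a, b} \<Longrightarrow> ptr ?U r {a, b} x y =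
      ptr ?U r {a} (x \<inter> A) (y \<inter> A) * ptr ?U r {b} (x - A) (y - A)"
  proof -
    fix x y assume x: "x \<subseteq> {a, b}" and y: "y \<subseteq> {a, b}"
    have "ptr ?U r {a, b} x y = ptr ?U s {a, b} x y" using rs by simp
    also have "\<dots> = ptr A (ptr ?U r A) {a} (x \<inter> A) (y \<inter> A) * ptr (?U - A) (ptr ?U r (?U - A)) {b} (x - A) (y - A)"
      unfolding s_def using ptr_tens[OF finU A(2) abU x y] pabA by simp
    also have "ptr A (ptr ?U r A) {a} (x \<inter> A) (y \<inter> A) = ptr ?U r {a} (x \<inter> A) (y \<inter> A)"
      using ptr_ptr[of ?U "{a}" A r] a A(2) by simp
    also have "ptr (?U - A) (ptr ?U r (?U - A)) {b} (x - A) (y - A) = ptr ?U r {b} (x - A) (y - A)"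
      using ptr_ptr[of ?U "{b}" "?U - A" r] b by simp
    finally show "ptr ?U r {a, b} x y = ptr ?U r {a} (x \<inter> A) (y \<inter> A) * ptr ?U r {b} (x - A) (y - A)" .
  qed
  have "ptr ?U r {a, b} (swap_lbl a b {a}) {a} = ptr ?U r {a, b} {a} {a}"
    by (rule ptr_invar) (use inv aU b abU in auto)
  then have "ptr ?U r {a, b} {b} {a} = ptr ?U r {a, b} {a} {a}" unfolding swap_single .
  moreover have "ptr ?U r {a, b} {b} {a} = ptr ?U r {a} {} {a} * ptr ?U r {b} {b} {}"
    using pt[of "{b}" "{a}"] a b by (simp add: Int_absorb2 insert_Diff_if)
  moreover have "ptr ?U r {a, b} {a} {a} = ptr ?U r {a} {a} {a} * ptr ?U r {b} {} {}"
    using pt[of "{a}" "{a}"] a b by simp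
  ultimately have det: "cnj \<beta> * \<beta> = \<gamma> * \<alpha>"
    using E3[OF b(1)] E1 unfolding \<gamma>_def \<tau>_def by simp
  obtain k and f :: "nat \<Rightarrow> nat set \<Rightarrow> complex" where f: "rk1 ?U r ({..<k}) f"
    using density_rk1[OF d] by blast
  have rk: "\<And>x y. x \<subseteq> ?U \<Longrightarrow> y \<subseteq> ?U \<Longrightarrow> r x y = (\<Sum>j<k. f j x * cnj (f j y))"
    using f unfolding rk1_def by auto
  show ?thesis
  proof (cases "\<alpha> = 0")
    case False
    define lam where "lam = \<beta> / \<alpha>"
    have E: "\<And>i. i \<in> ?U \<Longrightarrow> cnj (cnj \<beta>) * cnj \<beta> * ptr ?U r {i} {} {} + cnj (cnj \<beta>) * (- \<alpha>) * ptr ?U r {i} {} {i}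
            + cnj (- \<alpha>) * cnj \<beta> * ptr ?U r {i} {i} {} + cnj (- \<alpha>) * (- \<alpha>) * ptr ?U r {i} {i} {i} = 0"
    proof -
      fix i assume "i \<in> ?U"
      then have e: "ptr ?U r {i} {} {} = \<alpha>" "ptr ?U r {i} {} {i} = cnj \<beta>" "ptr ?U r {i} {i} {} = \<beta>" "ptr ?U r {i} {i} {i} = \<gamma>"
        using E3 by auto
      have "\<beta> * cnj \<beta> * \<alpha> + \<beta> * (- \<alpha>) * cnj \<beta> + (- \<alpha>) * cnj \<beta> * \<beta> + \<alpha> * \<alpha> * \<gamma> = \<alpha> * (\<gamma> * \<alpha> - cnj \<beta> * \<beta>)"
        by (simp add: algebra_simps)
      also have "\<dots> = 0" using det by simp
      finally show "cnj (cnj \<beta>) * cnj \<beta> * ptr ?U r {i} {} {} + cnj (cnj \<beta>) * (- \<alpha>) * ptr ?U r {i} {} {i}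
            + cnj (- \<alpha>) * cnj \<beta> * ptr ?U r {i} {i} {} + cnj (- \<alpha>) * (- \<alpha>) * ptr ?U r {i} {i} {i} = 0"
        unfolding e using E2 by (simp add: algebra_simps)
    qed
    have rec: "\<And>j i w. j < k \<Longrightarrow> i \<in> ?U \<Longrightarrow> w \<subseteq> ?U - {i} \<Longrightarrow> f j (insert i w) = lam * f j w"
    proof -
      fix j i w assume j: "j < k" and i: "i \<in> ?U" and w: "w \<subseteq> ?U - {i}"
      have "cnj (f j w) * cnj \<beta> + cnj (f j (insert i w)) * (- \<alpha>) = 0"
        using kernel_step[OF d f i E[OF i] w j] .
      then have "cnj (cnj (f j w) * cnj \<beta> + cnj (f j (insert i w)) * (- \<alpha>)) = 0" by simp
      then have "f j w * \<beta> - f j (insert i w) * \<alpha> = 0" using E2 by simp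
      then show "f j (insert i w) = lam * f j w" unfolding lam_def using False by (simp add: field_simps)
    qed
    have fpow: "\<And>j x. j < k \<Longrightarrow> x \<subseteq> ?U \<Longrightarrow> f j x = lam ^ card x * f j {}"
    proof -
      fix j x assume j: "j < k" and x: "x \<subseteq> ?U"
      show "f j x = lam ^ card x * f j {}"
        by (rule recur_pow[of ?U "f j" lam, OF finU rec[OF j] x])
    qed
    define \<Psi> where "\<Psi> x = (if x \<subseteq> ?U then lam ^ card x else 0)" for x
    define c where "c = (\<Sum>j<k. (cmod (f j {}))\<^sup>2)"
    have c0: "c \<ge> 0" unfolding c_def by (simp add: sum_nonneg)
    have form: "\<And>x y. x \<subseteq> ?U \<Longrightarrow> y \<subseteq> ?U \<Longrightarrow> r x y = complex_of_real c * \<Psi> x * cnj (\<Psi> y)"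
    proof -
      fix x y assume x: "x \<subseteq> ?U" and y: "y \<subseteq> ?U"
      have "r x y = (\<Sum>j<k. (lam ^ card x * cnj (lam ^ card y)) * (cnj (f j {}) * f j {}))"
        unfolding rk[OF x y]
      proof (rule sum.cong[OF refl])
        fix j assume "j \<in> {..<k}"
        then have j: "j < k" by simp
        have "f j x * cnj (f j y) = lam ^ card x * f j {} * cnj (lam ^ card y * f j {})"
          by (simp only: fpow[OF j x] fpow[OF j y])
        then show "f j x * cnj (f j y) = (lam ^ card x * cnj (lam ^ card y)) * (cnj (f j {}) * f j {})"
          by (simp only: complex_cnj_mult ac_simps)
      qed
      also have "\<dots> = (lam ^ card x * cnj (lam ^ card y)) * complex_of_real c"
        unfolding c_def by (simp only: sum_distrib_left[symmetric] cnj_mult_self of_real_sum)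
      finally show "r x y = complex_of_real c * \<Psi> x * cnj (\<Psi> y)" unfolding \<Psi>_def using x y by simp
    qed
    have fa: "factorable ?U \<Psi>" unfolding \<Psi>_def by (rule factorable_pow[OF finU])
    have iv: "is_vec ?U \<Psi>" unfolding is_vec_def \<Psi>_def by simp
    show ?thesis using pure_from_form[OF d iv fa c0 form] .
  next
    case True
    have b0: "\<beta> = 0" using det True by simp
    have E: "\<And>i. i \<in> ?U \<Longrightarrow> cnj 1 * 1 * ptr ?U r {i} {} {} + cnj 1 * 0 * ptr ?U r {i} {} {i}
            + cnj 0 * 1 * ptr ?U r {i} {i} {} + cnj 0 * 0 * ptr ?U r {i} {i} {i} = 0"
      using E3 True by simp
    have zero: "\<And>j x. j < k \<Longrightarrow> x \<subseteq> ?U \<Longrightarrow> x \<noteq> ?U \<Longrightarrow> f j x = 0"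
    proof -
      fix j x assume j: "j < k" and x: "x \<subseteq> ?U" "x \<noteq> ?U"
      then obtain i where i: "i \<in> ?U" "i \<notin> x" by blast
      then have w: "x \<subseteq> ?U - {i}" using x by blast
      have "cnj (f j x) * 1 + cnj (f j (insert i x)) * 0 = 0"
        using kernel_step[OF d f i(1) E[OF i(1)] w j] .
      then show "f j x = 0" by simp
    qed
    define c where "c = (\<Sum>j<k. (cmod (f j ?U))\<^sup>2)"
    have c0: "c \<ge> 0" unfolding c_def by (simp add: sum_nonneg)
    have form: "\<And>x y. x \<subseteq> ?U \<Longrightarrow> y \<subseteq> ?U \<Longrightarrow> r x y = complex_of_real c * ev ?U x * cnj (ev ?U y)"
    proof -
      fix x y assume x: "x \<subseteq> ?U" and y: "y \<subseteq> ?U"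
      show "r x y = complex_of_real c * ev ?U x * cnj (ev ?U y)"
      proof (cases "x = ?U \<and> y = ?U")
        case True
        have "r x y = (\<Sum>j<k. cnj (f j ?U) * f j ?U)" unfolding rk[OF x y] using True by (simp add: mult.commute)
        also have "\<dots> = complex_of_real c" unfolding c_def by (simp only: cnj_mult_self of_real_sum)
        finally show ?thesis using True by (simp add: ev_def)
      next
        case False
        then have "\<And>j. j < k \<Longrightarrow> f j x * cnj (f j y) = 0" using zero x y by auto
        then have "r x y = 0" unfolding rk[OF x y] by (simp del: mult_eq_0_iff)
        then show ?thesis using False by (auto simp: ev_def)
      qed
    qed
    have iv: "is_vec ?U (ev ?U)" unfolding is_vec_def ev_def by simp
    show ?thesis using pure_from_form[OF d iv factorable_evU c0 form] .
  qed
qed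

lemma fullsep_proj: "pure_fullsep n \<Phi> \<Longrightarrow> fully_separable n (proj \<Phi>)"
  unfolding fully_separable_def convex_pure_def
  by (rule exI[of _ 1], rule exI[of _ "\<lambda>_. 1"], rule exI[of _ "\<lambda>_. \<Phi>"]) auto

lemma tens_neq:
  assumes d: "density n r" and inv: "\<forall>i\<in>qubits n. \<forall>j\<in>qubits n. invar r i j"
    and ent: "\<not> fully_separable n r"
    and A: "A \<noteq> {}" "A \<subseteq> qubits n" "A \<noteq> qubits n"
  shows "tens (qubits n) A (ptr (qubits n) r A) (ptr (qubits n) r (qubits n - A)) \<noteq> r"
proof
  assume "tens (qubits n) A (ptr (qubits n) r A) (ptr (qubits n) r (qubits n - A)) = r"
  then obtain \<Phi> where "pure_fullsep n \<Phi>" "r = proj \<Phi>"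
    using sym_tensor_fullsep[OF d inv A] by metis
  then show False using ent fullsep_proj by blast
qed

lemma fullsep_factorable:
  assumes "pure_fullsep n \<Phi>"
  shows "factorable (qubits n) \<Phi>"
  unfolding factorable_def
proof (intro allI impI)
  fix S assume S: "S \<subseteq> qubits n"
  show "\<exists>g h. \<forall>x\<subseteq>qubits n. \<Phi> x = g (x \<inter> S) * h (x - S)"
  proof (cases "S = {}")
    case True
    have "\<forall>x\<subseteq>qubits n. \<Phi> x = (\<lambda>_. 1) (x \<inter> S) * \<Phi> (x - S)" using True by simp
    then show ?thesis by (intro exI[of _ "\<lambda>_. 1"] exI[of _ \<Phi>])
  next
    case False
    show ?thesis
    proof (cases "S = qubits n")
      case True
      have "\<forall>x\<subseteq>qubits n. \<Phi> x = \<Phi> (x \<inter> S) * (\<lambda>_. 1) (x - S)" using True by (simp add: Int_absorb2)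
      then show ?thesis by (intro exI[of _ \<Phi>] exI[of _ "\<lambda>_. 1"])
    next
      case False': False
      then have "proper_bipart n S" using False S unfolding proper_bipart_def by blast
      then have "product_wrt n S \<Phi>" using assms unfolding pure_fullsep_def by blast
      then obtain \<alpha> \<beta> where "\<forall>x\<subseteq>qubits n. \<Phi> x = \<alpha> (x \<inter> S) * \<beta> (x - S)"
        unfolding product_wrt_def by blast
      then show ?thesis by (intro exI[of _ \<alpha>] exI[of _ \<beta>])
    qed
  qed
qed

lemma factorable_cong:
  assumes "factorable U \<Phi>" "\<And>x. x \<subseteq> U \<Longrightarrow> \<psi> x = c * \<Phi> x"
  shows "factorable U \<psi>"
  unfolding factorable_def
proof (intro allI impI)
  fix S assume "S \<subseteq> U"
  then obtain g h where gh: "\<forall>x\<subseteq>U. \<Phi> x = g (x \<inter> S) * h (x - S)"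
    using assms(1) unfolding factorable_def by presburger
  have "\<forall>x\<subseteq>U. \<psi> x = (\<lambda>a. c * g a) (x \<inter> S) * h (x - S)" using gh assms(2) by simp
  then show "\<exists>g h. \<forall>x\<subseteq>U. \<psi> x = g (x \<inter> S) * h (x - S)"
    by (intro exI[of _ "\<lambda>a. c * g a"] exI[of _ h])
qed

lemma density_proj:
  assumes u: "unit_vec (qubits n) \<psi>"
  shows "density n (proj \<psi>)"
proof -
  let ?U = "qubits n"
  have iv: "is_vec ?U \<psi>" using u unfolding unit_vec_def by simp
  have op: "is_op ?U (proj \<psi>)" using iv unfolding is_op_def is_vec_def proj_def by auto
  have h: "herm (proj \<psi>)" unfolding herm_def proj_def by simp
  have "rk1 ?U (proj \<psi>) {0::nat} (\<lambda>_. \<psi>)" unfolding rk1_def proj_def by simp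
  then have ps: "psd ?U (proj \<psi>)" by (rule rk1_psd)
  have "\<And>x. proj \<psi> x x = complex_of_real ((cmod (\<psi> x))\<^sup>2)"
    unfolding proj_def by (metis complex_norm_square)
  then have "(\<Sum>x\<in>Pow ?U. proj \<psi> x x) = complex_of_real (\<Sum>x\<in>Pow ?U. (cmod (\<psi> x))\<^sup>2)" by simp
  then have tr: "(\<Sum>x\<in>Pow ?U. proj \<psi> x x) = 1" using u unfolding unit_vec_def by simp
  show ?thesis unfolding density_iff using op h ps tr by blast
qed

lemma ptr_proj_prod:
  assumes fin: "finite U" and S: "S \<subseteq> U" and ub: "unit_vec (U - S) \<beta>"
    and fac: "\<And>x. x \<subseteq> U \<Longrightarrow> \<psi> x = \<alpha> (x \<inter> S) * \<beta> (x - S)"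
    and x: "x \<subseteq> S" and y: "y \<subseteq> S"
  shows "ptr U (proj \<psi>) S x y = \<alpha> x * cnj (\<alpha> y)"
proof -
  have "ptr U (proj \<psi>) S x y = (\<Sum>z\<in>Pow (U - S). \<alpha> x * cnj (\<alpha> y) * (\<beta> z * cnj (\<beta> z)))"
    unfolding ptr_def using x y
  proof (simp, intro sum.cong refl)
    fix z assume z: "z \<in> Pow (U - S)"
    have "(x \<union> z) \<inter> S = x" "(x \<union> z) - S = z" "(y \<union> z) \<inter> S = y" "(y \<union> z) - S = z" "x \<union> z \<subseteq> U" "y \<union> z \<subseteq> U"
      using x y z S by auto
    then show "proj \<psi> (x \<union> z) (y \<union> z) = \<alpha> x * cnj (\<alpha> y) * (\<beta> z * cnj (\<beta> z))"
      unfolding proj_def using fac by (simp add: algebra_simps)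
  qed
  also have "\<dots> = \<alpha> x * cnj (\<alpha> y) * (\<Sum>z\<in>Pow (U - S). complex_of_real ((cmod (\<beta> z))\<^sup>2))"
    by (simp only: sum_distrib_left[symmetric] complex_norm_square)
  also have "\<dots> = \<alpha> x * cnj (\<alpha> y)"
    using ub unfolding unit_vec_def by (simp only: of_real_sum[symmetric]) simp
  finally show ?thesis .
qed

lemma sym_bisep_fullsep:
  assumes pb: "pure_bisep n \<psi>" and sym: "\<forall>a\<in>qubits n. \<forall>b\<in>qubits n. \<forall>x. \<psi> (swap_lbl a b x) = \<psi> x"
  shows "pure_fullsep n \<psi>"
proof -
  let ?U = "qubits n"
  have finU: "finite ?U" by simp
  have un: "unit_vec ?U \<psi>" using pb unfolding pure_bisep_def by simp
  obtain S where S: "proper_bipart n S" "product_wrt n S \<psi>" using pb unfolding pure_bisep_def by blast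
  obtain \<alpha> \<beta> where ab: "unit_vec S \<alpha>" "unit_vec (?U - S) \<beta>" and fac: "\<forall>x\<subseteq>?U. \<psi> x = \<alpha> (x \<inter> S) * \<beta> (x - S)"
    using S(2) unfolding product_wrt_def by blast
  have SU: "S \<noteq> {}" "S \<subseteq> ?U" "S \<noteq> ?U" using S(1) unfolding proper_bipart_def by auto
  define rp where "rp = proj \<psi>"
  have d: "density n rp" unfolding rp_def by (rule density_proj[OF un])
  have inv: "\<forall>i\<in>?U. \<forall>j\<in>?U. invar rp i j"
    unfolding rp_def invar_def proj_def using sym by simp
  have fac2: "\<And>x. x \<subseteq> ?U \<Longrightarrow> \<psi> x = \<beta> (x \<inter> (?U - S)) * \<alpha> (x - (?U - S))"
  proof -
    fix x assume x: "x \<subseteq> ?U"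
    have "x \<inter> (?U - S) = x - S" "x - (?U - S) = x \<inter> S" using x by auto
    then show "\<psi> x = \<beta> (x \<inter> (?U - S)) * \<alpha> (x - (?U - S))" using fac x by (simp add: mult.commute)
  qed
  have ua: "unit_vec (?U - (?U - S)) \<alpha>" using ab(1) SU by (simp add: double_diff)
  have eq: "rp = tens ?U S (ptr ?U rp S) (ptr ?U rp (?U - S))"
  proof (intro ext)
    fix x y
    show "rp x y = tens ?U S (ptr ?U rp S) (ptr ?U rp (?U - S)) x y"
    proof (cases "x \<subseteq> ?U \<and> y \<subseteq> ?U")
      case True
      have p1: "ptr ?U rp S (x \<inter> S) (y \<inter> S) = \<alpha> (x \<inter> S) * cnj (\<alpha> (y \<inter> S))"
        unfolding rp_def by (rule ptr_proj_prod[OF finU SU(2) ab(2)]) (use fac in auto)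
      have p2: "ptr ?U rp (?U - S) (x - S) (y - S) = \<beta> (x - S) * cnj (\<beta> (y - S))"
        unfolding rp_def by (rule ptr_proj_prod[OF finU _ ua fac2]) (use True in auto)
      have "tens ?U S (ptr ?U rp S) (ptr ?U rp (?U - S)) x y = ptr ?U rp S (x \<inter> S) (y \<inter> S) * ptr ?U rp (?U - S) (x - S) (y - S)"
        using True by (simp add: tens_def)
      also have "\<dots> = \<alpha> (x \<inter> S) * cnj (\<alpha> (y \<inter> S)) * (\<beta> (x - S) * cnj (\<beta> (y - S)))" using p1 p2 by simp
      also have "\<dots> = rp x y" using True fac unfolding rp_def proj_def by (simp add: algebra_simps)
      finally show ?thesis by simp
    next
      case False
      then have "rp x y = 0" using d unfolding density_iff is_op_def by blast
      moreover have "tens ?U S (ptr ?U rp S) (ptr ?U rp (?U - S)) x y = 0"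
        using False unfolding tens_def by (simp only: if_False)
      ultimately show ?thesis by simp
    qed
  qed
  obtain \<Phi> where \<Phi>: "pure_fullsep n \<Phi>" "rp = proj \<Phi>"
    using sym_tensor_fullsep[OF d inv SU eq] by metis
  have uP: "unit_vec ?U \<Phi>" using \<Phi>(1) unfolding pure_fullsep_def by simp
  obtain y0 where y0: "y0 \<subseteq> ?U" "\<Phi> y0 \<noteq> 0"
  proof (rule ccontr)
    assume "\<not> thesis"
    then have "\<And>y. y \<subseteq> ?U \<Longrightarrow> \<Phi> y = 0" using that by blast
    then have "(\<Sum>x\<in>Pow ?U. (cmod (\<Phi> x))\<^sup>2) = 0" by simp
    then show False using uP unfolding unit_vec_def by simp
  qed
  have pe: "\<And>x. \<psi> x * cnj (\<psi> y0) = \<Phi> x * cnj (\<Phi> y0)" using \<Phi>(2) unfolding rp_def proj_def by metis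
  have "\<psi> y0 * cnj (\<psi> y0) \<noteq> 0" using pe[of y0] y0 by simp
  then have p0: "cnj (\<psi> y0) \<noteq> 0" by simp
  have "\<And>x. x \<subseteq> ?U \<Longrightarrow> \<psi> x = (cnj (\<Phi> y0) / cnj (\<psi> y0)) * \<Phi> x"
    using pe p0 by (simp add: field_simps)
  then have "factorable ?U \<psi>" by (rule factorable_cong[OF fullsep_factorable[OF \<Phi>(1)]])
  then show ?thesis by (rule fullsep_of_factorable[OF un])
qed

lemma fullsep_ev_empty: "pure_fullsep n (ev {})"
proof -
  have "factorable (qubits n) (ev {})" unfolding factorable_def
  proof (intro allI impI)
    fix S assume "S \<subseteq> qubits n"
    have "\<forall>x\<subseteq>qubits n. ev {} x = ev {} (x \<inter> S) * ev {} (x - S)" using ev_empty_prod by blast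
    then show "\<exists>g h. \<forall>x\<subseteq>qubits n. ev {} x = g (x \<inter> S) * h (x - S)"
      by (intro exI[of _ "ev {}"] exI[of _ "ev {}"])
  qed
  then show ?thesis using fullsep_of_factorable unit_ev_empty[of "qubits n"] by simp
qed

lemma sym_ent_GME:
  assumes d: "density n r" and inv: "\<forall>i\<in>qubits n. \<forall>j\<in>qubits n. invar r i j"
    and ent: "\<not> fully_separable n r"
  shows "genuinely_entangled n r"
  unfolding genuinely_entangled_def
proof
  let ?U = "qubits n"
  have h: "herm r" using d unfolding density_iff by simp
  assume "biseparable n r"
  then obtain k and p :: "nat \<Rightarrow> real" and \<psi> where
    pk: "\<forall>i<k. p i \<ge> 0 \<and> pure_bisep n (\<psi> i)" and ps: "(\<Sum>i<k. p i) = 1"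
    and rr: "r = (\<lambda>x y. \<Sum>i<k. complex_of_real (p i) * proj (\<psi> i) x y)"
    unfolding biseparable_def convex_pure_def by blast
  define f where "f i x = complex_of_real (sqrt (p i)) * \<psi> i x" for i x
  have rk: "\<And>x y. x \<in> Pow ?U \<Longrightarrow> y \<in> Pow ?U \<Longrightarrow> r x y = (\<Sum>i\<in>{..<k}. f i x * cnj (f i y))"
  proof -
    fix x y
    have "\<And>i. i < k \<Longrightarrow> complex_of_real (p i) * proj (\<psi> i) x y = f i x * cnj (f i y)"
    proof -
      fix i assume "i < k"
      then have "p i \<ge> 0" using pk by blast
      then have "sqrt (p i) * sqrt (p i) = p i" by simp
      then have sq: "complex_of_real (sqrt (p i)) * complex_of_real (sqrt (p i)) = complex_of_real (p i)"
        by (metis of_real_mult)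
      have "f i x * cnj (f i y) = complex_of_real (sqrt (p i)) * complex_of_real (sqrt (p i)) * (\<psi> i x * cnj (\<psi> i y))"
        by (simp add: f_def algebra_simps)
      then show "complex_of_real (p i) * proj (\<psi> i) x y = f i x * cnj (f i y)"
        unfolding sq proj_def by simp
    qed
    then show "r x y = (\<Sum>i\<in>{..<k}. f i x * cnj (f i y))" unfolding rr by simp
  qed
  have symm: "\<And>i. i < k \<Longrightarrow> p i > 0 \<Longrightarrow> \<forall>a\<in>?U. \<forall>b\<in>?U. \<forall>x. \<psi> i (swap_lbl a b x) = \<psi> i x"
  proof (intro ballI allI)
    fix i a b x assume i: "i < k" and pi: "p i > 0" and a: "a \<in> ?U" and b: "b \<in> ?U"
    let ?P = "swap_lbl a b"
    have ivi: "is_vec ?U (\<psi> i)" using pk i unfolding pure_bisep_def unit_vec_def by blast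
    show "\<psi> i (?P x) = \<psi> i x"
    proof (cases "x \<subseteq> ?U")
      case True
      have Px: "?P x \<subseteq> ?U" using True swap_subset_iff a b by blast
      define g where "g = (\<lambda>y. ev x y + (-1) * ev (?P x) y)"
      have iab: "invar r a b" using inv a b by blast
      have "qf ?U r g = r x x - r x (?P x) - r (?P x) x + r (?P x) (?P x)"
        unfolding g_def qf_add using True Px by (simp add: qf_ev bil_ev_ev)
      also have "\<dots> = 0"
      proof -
        have "r (?P x) (?P x) = r x (?P x)" "r (?P x) x = r x x" using iab unfolding invar_def by blast+
        moreover have "r x (?P x) = r x x" using invar_right[OF h iab] .
        ultimately show ?thesis by simp
      qed
      finally have q0: "qf ?U r g = 0" .
      have "qf ?U r g = (\<Sum>j\<in>{..<k}. cnj (\<Sum>y\<in>Pow ?U. cnj (f j y) * g y) * (\<Sum>y\<in>Pow ?U. cnj (f j y) * g y))"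
        unfolding qf_qfX by (rule qfX_rank1[OF rk])
      then have s0: "(\<Sum>y\<in>Pow ?U. cnj (f i y) * g y) = 0"
        using sum_norm_zero[of "\<lambda>j. \<Sum>y\<in>Pow ?U. cnj (f j y) * g y" k i] q0 i by simp
      have "(\<Sum>y\<in>Pow ?U. cnj (f i y) * g y) = (\<Sum>y\<in>Pow ?U. cnj (f i y) * ev x y) - (\<Sum>y\<in>Pow ?U. cnj (f i y) * ev (?P x) y)"
        unfolding g_def by (simp add: algebra_simps sum_subtractf)
      also have "\<dots> = cnj (f i x) - cnj (f i (?P x))"
        using True Px by (simp add: ev_def sum_delta_mult del: mult_cancel_left1 mult_cancel_right1)
      finally have "f i x = f i (?P x)" using s0 by simp
      moreover have "complex_of_real (sqrt (p i)) \<noteq> 0" using pi by simp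
      ultimately show ?thesis unfolding f_def by simp
    next
      case False
      then have "\<not> ?P x \<subseteq> ?U" using swap_subset_iff a b by blast
      then show ?thesis using False ivi unfolding is_vec_def by simp
    qed
  qed
  define \<psi>' where "\<psi>' i = (if p i > 0 then \<psi> i else ev {})" for i
  have c1: "\<forall>i<k. p i \<ge> 0 \<and> pure_fullsep n (\<psi>' i)"
  proof (intro allI impI conjI)
    fix i assume i: "i < k"
    show "p i \<ge> 0" using pk i by blast
    show "pure_fullsep n (\<psi>' i)"
    proof (cases "p i > 0")
      case True
      then show ?thesis unfolding \<psi>'_def using sym_bisep_fullsep[of n "\<psi> i"] pk i symm[OF i] by simp
    next
      case False then show ?thesis unfolding \<psi>'_def using fullsep_ev_empty by simp
    qed
  qed
  have c3: "r = (\<lambda>x y. \<Sum>i<k. complex_of_real (p i) * proj (\<psi>' i) x y)"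
  proof (intro ext)
    fix x y
    have "\<And>i. i < k \<Longrightarrow> complex_of_real (p i) * proj (\<psi> i) x y = complex_of_real (p i) * proj (\<psi>' i) x y"
    proof -
      fix i assume "i < k"
      then have "p i \<ge> 0" using pk by blast
      then show "complex_of_real (p i) * proj (\<psi> i) x y = complex_of_real (p i) * proj (\<psi>' i) x y"
        unfolding \<psi>'_def by (cases "p i > 0") auto
    qed
    then show "r x y = (\<Sum>i<k. complex_of_real (p i) * proj (\<psi>' i) x y)" unfolding rr
      by (intro sum.cong) (auto simp del: mult_eq_0_iff of_real_eq_0_iff)
  qed
  have "fully_separable n r" unfolding fully_separable_def convex_pure_def using c1 ps c3 by blast
  then show False using ent by simp
qed

lemma card_qubits[simp]: "card (qubits n) = n" by (simp add: qubits_def)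

lemma ceil_facts:
  fixes a b :: nat
  assumes "a \<ge> 1" "b \<ge> 1"
  defines "c0 \<equiv> nat \<lceil>real a / real b\<rceil>"
  shows "a \<le> c0 * b" "1 \<le> c0" "\<And>c. a \<le> c * b \<Longrightarrow> c0 \<le> c"
proof -
  have bp: "real b > 0" using assms by simp
  have x: "real a / real b \<le> of_int \<lceil>real a / real b\<rceil>" by (rule le_of_int_ceiling)
  have pos: "real a / real b > 0" using assms by simp
  then have cpos: "\<lceil>real a / real b\<rceil> \<ge> 1" by simp
  then have rc: "real c0 = of_int \<lceil>real a / real b\<rceil>" unfolding c0_def by simp
  have "real a \<le> real c0 * real b" unfolding rc using pos_divide_le_eq[OF bp] x by blast
  then show "a \<le> c0 * b" by (metis of_nat_le_iff of_nat_mult)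
  show "1 \<le> c0" using cpos unfolding c0_def by linarith
  fix c assume "a \<le> c * b"
  then have "real a \<le> real c * real b" by (metis of_nat_le_iff of_nat_mult)
  then have "real a / real b \<le> real c" using bp by (simp add: divide_le_eq)
  then have "\<lceil>real a / real b\<rceil> \<le> int c" by (metis ceiling_le_iff of_int_of_nat_eq)
  then show "c0 \<le> c" unfolding c0_def by (simp only: nat_le_iff)
qed

lemma full_compat:
  assumes d: "density n r"
  shows "compat n r {qubits n} = {r}"
proof
  show "{r} \<subseteq> compat n r {qubits n}" using d unfolding compat_def by auto
  show "compat n r {qubits n} \<subseteq> {r}"
  proof
    fix s assume "s \<in> compat n r {qubits n}"
    then have ds: "density n s" and eq: "ptrace n s (qubits n) = ptrace n r (qubits n)" unfolding compat_def by auto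
    have "s = r"
    proof (intro ext)
      fix x y
      show "s x y = r x y"
      proof (cases "x \<subseteq> qubits n \<and> y \<subseteq> qubits n")
        case True
        have "ptrace n s (qubits n) x y = s x y" "ptrace n r (qubits n) x y = r x y"
          using True by (simp_all add: ptrace_def)
        then show ?thesis using eq by metis
      next
        case False then show ?thesis using d ds unfolding density_iff is_op_def by metis
      qed
    qed
    then show "s \<in> {r}" by simp
  qed
qed

lemma rho_in_compat: "density n r \<Longrightarrow> r \<in> compat n r SS"
  unfolding compat_def by simp

lemma generic:
  fixes G :: "nat set set \<Rightarrow> bool" and n :: nat and \<rho>
  assumes n2: "n \<ge> 2" and d: "density n \<rho>" and inv: "\<forall>i\<in>qubits n. \<forall>j\<in>qubits n. invar \<rho> i j"
    and g1: "\<And>SS. G SS \<Longrightarrow> SS \<subseteq> Pow (qubits n)"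
    and g2: "\<And>SS SS0. G SS0 \<Longrightarrow> SS \<subseteq> Pow (qubits n) \<Longrightarrow> compat n \<rho> SS \<subseteq> compat n \<rho> SS0 \<Longrightarrow> G SS"
    and g3: "\<And>SS A. SS \<subseteq> Pow (qubits n) \<Longrightarrow> A \<noteq> {} \<Longrightarrow> A \<subseteq> qubits n \<Longrightarrow> A \<noteq> qubits n
              \<Longrightarrow> (\<forall>S\<in>SS. S \<subseteq> A \<or> S \<inter> A = {}) \<Longrightarrow> \<not> G SS"
    and g4: "G {qubits n}"
  shows "(LEAST k. \<exists>SS. G SS \<and> (\<forall>S\<in>SS. card S \<le> k)) \<ge> 2 \<and>
    (LEAST c. \<exists>SS. SS \<subseteq> subsets_k n (LEAST k. \<exists>SS. G SS \<and> (\<forall>S\<in>SS. card S \<le> k)) \<and> G SS \<and> card SS = c)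
      = nat \<lceil>real (n - 1) / real ((LEAST k. \<exists>SS. G SS \<and> (\<forall>S\<in>SS. card S \<le> k)) - 1)\<rceil>"
proof -
  let ?U = "qubits n"
  define K where "K = (LEAST k. \<exists>SS. G SS \<and> (\<forall>S\<in>SS. card S \<le> k))"
  have finU: "finite ?U" by simp
  have Pn: "\<exists>SS. G SS \<and> (\<forall>S\<in>SS. card S \<le> n)" using g4 by (intro exI[of _ "{?U}"]) simp
  have PK: "\<exists>SS. G SS \<and> (\<forall>S\<in>SS. card S \<le> K)" unfolding K_def by (rule LeastI_ex[OF exI[of _ n]], rule Pn)
  have Kn: "K \<le> n" unfolding K_def by (rule Least_le, rule Pn)
  have oneU: "1 \<in> ?U" "2 \<in> ?U" using n2 by (auto simp: qubits_def)
  have K2: "K \<ge> 2"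
  proof (rule ccontr)
    assume "\<not> K \<ge> 2"
    then have K1: "K \<le> 1" by simp
    obtain SS where SS: "G SS" "\<forall>S\<in>SS. card S \<le> K" using PK by blast
    have sub: "SS \<subseteq> Pow ?U" using g1 SS(1) .
    have "\<forall>S\<in>SS. S \<subseteq> {1} \<or> S \<inter> {1} = {}"
    proof
      fix S assume S: "S \<in> SS"
      then have fS: "finite S" using sub finite_subset finU by blast
      have "card S \<le> Suc 0" using SS(2) S K1 by fastforce
      then have all: "\<forall>a1\<in>S. \<forall>a2\<in>S. a1 = a2" using card_le_Suc0_iff_eq[OF fS] by blast
      show "S \<subseteq> {1} \<or> S \<inter> {1} = {}"
      proof (cases "1 \<in> S")
        case True then show ?thesis using all by blast
      next
        case False then show ?thesis by blast
      qed
    qed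
    moreover have "{1} \<noteq> ?U"
    proof
      assume "{1} = ?U"
      then have "(2::nat) \<in> {1}" using oneU(2) by simp
      then show False by simp
    qed
    ultimately have "\<not> G SS" using g3[OF sub, of "{1}"] oneU by blast
    then show False using SS(1) by blast
  qed
  obtain SS0 where SS0: "G SS0" "\<forall>S\<in>SS0. card S \<le> K" using PK by blast
  define c0 where "c0 = nat \<lceil>real (n - 1) / real (K - 1)\<rceil>"
  have cf: "n - 1 \<le> c0 * (K - 1)" "1 \<le> c0" "\<And>c. n - 1 \<le> c * (K - 1) \<Longrightarrow> c0 \<le> c"
    using ceil_facts[of "n - 1" "K - 1"] n2 K2 unfolding c0_def by auto
  define F where "F = Sset n K ` {..<c0}"
  have FU: "F \<subseteq> Pow ?U" unfolding F_def using Sset_sub[OF Kn] by blast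
  have Fk: "F \<subseteq> subsets_k n K" unfolding F_def subsets_k_def using Sset_sub[OF Kn] Sset_card by blast
  have cF: "card F \<le> c0" unfolding F_def using card_image_le[of "{..<c0}" "Sset n K"] by simp
  have fsr: "fsym ?U \<rho>" unfolding fsym_def using inv invar_both[of \<rho>] d unfolding density_iff by blast
  have up: "compat n \<rho> F \<subseteq> compat n \<rho> SS0"
  proof
    fix s assume s: "s \<in> compat n \<rho> F"
    have ds: "density n s" using s unfolding compat_def by simp
    have hs: "herm s" and ps: "psd ?U s" and os: "is_op ?U s" using ds unfolding density_iff by auto
    have eqs: "\<And>t. t < c0 \<Longrightarrow> ptr ?U s (Sset n K t) = ptr ?U \<rho> (Sset n K t)"
      using s unfolding compat_def F_def ptrace_ptr by auto
    have Rset: "\<And>t i j. t < c0 \<Longrightarrow> i \<in> Sset n K t \<Longrightarrow> j \<in> Sset n K t \<Longrightarrow> invar s i j"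
    proof -
      fix t i j assume t: "t < c0" and i: "i \<in> Sset n K t" and j: "j \<in> Sset n K t"
      have "invar \<rho> i j" using inv i j Sset_sub[OF Kn] by blast
      then show "invar s i j" using compat_invar[OF finU hs ps os Sset_sub[OF Kn] i j _ eqs[OF t]] by blast
    qed
    have to1: "\<And>i. i \<in> ?U \<Longrightarrow> invar s i 1"
      by (rule chain_conn[of K n c0 "invar s", OF K2 Kn cf(1) cf(2) invar_sym invar_trans Rset])
    have allinv: "\<forall>i\<in>?U. \<forall>j\<in>?U. invar s i j"
    proof (intro ballI)
      fix i j assume "i \<in> ?U" "j \<in> ?U"
      then have "invar s i 1" "invar s 1 j" using to1 invar_sym by blast+
      then show "invar s i j" by (rule invar_trans)
    qed
    have fss: "fsym ?U s" unfolding fsym_def using allinv invar_both[OF hs] by blast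
    have cS0: "card (Sset n K 0) = K" by (rule Sset_card)
    have e0: "ptr ?U s (Sset n K 0) = ptr ?U \<rho> (Sset n K 0)" using eqs cf(2) by simp
    have "\<forall>T\<in>SS0. ptr ?U s T = ptr ?U \<rho> T"
    proof
      fix T assume T: "T \<in> SS0"
      then have TU: "T \<subseteq> ?U" using g1[OF SS0(1)] by blast
      have "card T \<le> card (Sset n K 0)" using SS0(2) T cS0 by simp
      then show "ptr ?U s T = ptr ?U \<rho> T" using transport[OF finU fss fsr Sset_sub[OF Kn] e0 TU] by simp
    qed
    then show "s \<in> compat n \<rho> SS0" using ds unfolding compat_def ptrace_ptr by simp
  qed
  have GF: "G F" using g2[OF SS0(1) FU up] .
  have lower: "\<And>SS. SS \<subseteq> subsets_k n K \<Longrightarrow> G SS \<Longrightarrow> c0 \<le> card SS"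
  proof (rule ccontr)
    fix SS assume SS: "SS \<subseteq> subsets_k n K" "G SS" and "\<not> c0 \<le> card SS"
    then have "\<not> n - 1 \<le> card SS * (K - 1)" using cf(3)[of "card SS"] by blast
    then have lt: "card SS * (K - 1) < n - 1" by simp
    have sub: "SS \<subseteq> Pow ?U" using SS(1) unfolding subsets_k_def by blast
    have finSS: "finite SS" using sub finite_subset by (metis finU finite_Pow_iff)
    have cardS: "\<And>S. S \<in> SS \<Longrightarrow> card S = K" using SS(1) unfolding subsets_k_def by blast
    have ne: "\<forall>S\<in>SS. S \<subseteq> ?U \<and> S \<noteq> {}" using sub cardS K2 by fastforce
    have "(\<Sum>S\<in>SS. card S - 1) = (\<Sum>S\<in>SS. K - 1)" using cardS by simp
    then have sm: "(\<Sum>S\<in>SS. card S - 1) = card SS * (K - 1)" by simp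
    have "(\<Sum>S\<in>SS. card S - 1) + 1 < card ?U" using sm lt n2 by simp
    then obtain A where A: "A \<noteq> {}" "A \<subseteq> ?U" "A \<noteq> ?U" "\<forall>S\<in>SS. S \<subseteq> A \<or> S \<inter> A = {}"
      using split_exists[OF finU finSS ne] by blast
    then show False using g3[OF sub A(1-3)] SS(2) by blast
  qed
  have ex: "\<exists>SS. SS \<subseteq> subsets_k n K \<and> G SS \<and> card SS = card F" using Fk GF by blast
  define M where "M = (LEAST c. \<exists>SS. SS \<subseteq> subsets_k n K \<and> G SS \<and> card SS = c)"
  have "M \<le> card F" unfolding M_def by (rule Least_le, rule ex)
  moreover have "\<exists>SS. SS \<subseteq> subsets_k n K \<and> G SS \<and> card SS = M" unfolding M_def by (rule LeastI_ex, rule exI, rule ex)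
  then have "c0 \<le> M" using lower by blast
  ultimately have "M = c0" using cF by simp
  then show ?thesis using K2 unfolding M_def c0_def K_def by simp
qed

lemma split_in_compat:
  assumes d: "density n \<rho>" and sub: "SS \<subseteq> Pow (qubits n)" and A: "A \<subseteq> qubits n"
    and sp: "\<forall>S\<in>SS. S \<subseteq> A \<or> S \<inter> A = {}"
  shows "tens (qubits n) A (ptr (qubits n) \<rho> A) (ptr (qubits n) \<rho> (qubits n - A)) \<in> compat n \<rho> SS"
  unfolding compat_def ptrace_ptr
proof (intro CollectI conjI ballI)
  show "density n (tens (qubits n) A (ptr (qubits n) \<rho> A) (ptr (qubits n) \<rho> (qubits n - A)))"
    by (rule density_tens[OF d A])
  fix S assume S: "S \<in> SS"
  show "ptr (qubits n) (tens (qubits n) A (ptr (qubits n) \<rho> A) (ptr (qubits n) \<rho> (qubits n - A))) S = ptr (qubits n) \<rho> S"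
    by (rule compat_tens[OF d A]) (use S sub sp in auto)
qed

theorem mainTheorem4:
  fixes n :: nat and \<rho> :: "nat set \<Rightarrow> nat set \<Rightarrow> complex"
  assumes "n \<ge> 2" and "density n \<rho>" and "symmetric_state n \<rho>" and "entangled n \<rho>"
  shows "L_num n \<rho> \<ge> 2 \<and> l_num n \<rho> \<ge> 2
    \<and> M_num n \<rho> = nat \<lceil>real (n - 1) / real (L_num n \<rho> - 1)\<rceil>
    \<and> m_num n \<rho> = nat \<lceil>real (n - 1) / real (l_num n \<rho> - 1)\<rceil>"
proof -
  let ?U = "qubits n"
  have d: "density n \<rho>" using assms(2) .
  have inv: "\<forall>i\<in>?U. \<forall>j\<in>?U. invar \<rho> i j" using symmetric_invar[OF assms(2,3)] by blast
  have ent: "\<not> fully_separable n \<rho>" using assms(4) unfolding entangled_def .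
  have gme: "genuinely_entangled n \<rho>" by (rule sym_ent_GME[OF d inv ent])
  have L: "(LEAST k. \<exists>SS. determines n SS \<rho> \<and> (\<forall>S\<in>SS. card S \<le> k)) \<ge> 2 \<and>
    (LEAST c. \<exists>SS. SS \<subseteq> subsets_k n (LEAST k. \<exists>SS. determines n SS \<rho> \<and> (\<forall>S\<in>SS. card S \<le> k)) \<and> determines n SS \<rho> \<and> card SS = c)
      = nat \<lceil>real (n - 1) / real ((LEAST k. \<exists>SS. determines n SS \<rho> \<and> (\<forall>S\<in>SS. card S \<le> k)) - 1)\<rceil>"
  proof (rule generic[OF assms(1) d inv])
    show "\<And>SS. determines n SS \<rho> \<Longrightarrow> SS \<subseteq> Pow ?U" unfolding determines_def by blast
    show "\<And>SS SS0. determines n SS0 \<rho> \<Longrightarrow> SS \<subseteq> Pow ?U \<Longrightarrow> compat n \<rho> SS \<subseteq> compat n \<rho> SS0 \<Longrightarrow> determines n SS \<rho>"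
      unfolding determines_def using rho_in_compat[OF d] by blast
    show "determines n {?U} \<rho>" unfolding determines_def using full_compat[OF d] by simp
    fix SS A assume sub: "SS \<subseteq> Pow ?U" and A: "A \<noteq> {}" "A \<subseteq> ?U" "A \<noteq> ?U" and sp: "\<forall>S\<in>SS. S \<subseteq> A \<or> S \<inter> A = {}"
    have "tens ?U A (ptr ?U \<rho> A) (ptr ?U \<rho> (?U - A)) \<in> compat n \<rho> SS"
      by (rule split_in_compat[OF d sub A(2) sp])
    moreover have "tens ?U A (ptr ?U \<rho> A) (ptr ?U \<rho> (?U - A)) \<noteq> \<rho>" by (rule tens_neq[OF d inv ent A])
    ultimately show "\<not> determines n SS \<rho>" unfolding determines_def by blast
  qed
  have l: "(LEAST k. \<exists>SS. detects_GME n SS \<rho> \<and> (\<forall>S\<in>SS. card S \<le> k)) \<ge> 2 \<and>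
    (LEAST c. \<exists>SS. SS \<subseteq> subsets_k n (LEAST k. \<exists>SS. detects_GME n SS \<rho> \<and> (\<forall>S\<in>SS. card S \<le> k)) \<and> detects_GME n SS \<rho> \<and> card SS = c)
      = nat \<lceil>real (n - 1) / real ((LEAST k. \<exists>SS. detects_GME n SS \<rho> \<and> (\<forall>S\<in>SS. card S \<le> k)) - 1)\<rceil>"
  proof (rule generic[OF assms(1) d inv])
    show "\<And>SS. detects_GME n SS \<rho> \<Longrightarrow> SS \<subseteq> Pow ?U" unfolding detects_GME_def by blast
    show "\<And>SS SS0. detects_GME n SS0 \<rho> \<Longrightarrow> SS \<subseteq> Pow ?U \<Longrightarrow> compat n \<rho> SS \<subseteq> compat n \<rho> SS0 \<Longrightarrow> detects_GME n SS \<rho>"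
      unfolding detects_GME_def by blast
    show "detects_GME n {?U} \<rho>" unfolding detects_GME_def using full_compat[OF d] gme by simp
    fix SS A assume sub: "SS \<subseteq> Pow ?U" and A: "A \<noteq> {}" "A \<subseteq> ?U" "A \<noteq> ?U" and sp: "\<forall>S\<in>SS. S \<subseteq> A \<or> S \<inter> A = {}"
    have "tens ?U A (ptr ?U \<rho> A) (ptr ?U \<rho> (?U - A)) \<in> compat n \<rho> SS"
      by (rule split_in_compat[OF d sub A(2) sp])
    moreover have "biseparable n (tens ?U A (ptr ?U \<rho> A) (ptr ?U \<rho> (?U - A)))" by (rule biseparable_tens[OF d A])
    ultimately show "\<not> detects_GME n SS \<rho>" unfolding detects_GME_def genuinely_entangled_def by blast
  qed
  show ?thesis using L l unfolding L_num_def l_num_def M_num_def m_num_def by simp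
qed

end
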